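(* Let $W:\mathbb R\to SO(4)$ be a symmetric loop which is null-homotopic as a loop in $SO(4)$, and suppose some (equivalently every) continuous lift $\tilde W$ of $W$ satisfies $T(\tilde W(0))=-\tilde W(0)$. Choose the lift $\tilde W$ with $\tilde W(0)\in X_1$. Then $\tilde W(\pi)\in X_1\sqcup Y_1$, and $W$ is symmetrically homotopic to the constant loop $k\mapsto \mathrm{diag}(1,-1,1,-1)$ if and only if $\tilde W(\pi)\in X_1$; if $\tilde W(\pi)\in Y_1$, $W$ is not symmetrically homotopic to that constant loop.
   Context: Identify $\mathbb H$ with $\mathbb R^4$ via $x_0+x_1i+x_2j+x_3k\leftrightarrow(x_0,x_1,x_2,x_3)^T$; $Sp(1)$ is the group of unit quaternions, with componentwise product and conjugation on $Sp(1)\times Sp(1)$. Let $p:Sp(1)\times Sp(1)\to SO(4)$ send $(g,h)$ to the matrix of the $\mathbb R$-linear map $x\mapsto g^{-1}xh$ (a two-to-one covering map). Let $w=\begin{pmatrix}0&-I_2\\ I_2&0\end{pmatrix}$ and $\tilde w=(1,j)$, and $T(u,v)=\overline{\tilde w^{-1}(u,v)\tilde w}=(\bar u,\ j^{-1}\bar v j)$. Let $X_1=\{(bi+cj+dk,\ j):b^2+c^2+d^2=1\}$, $Y_1=\{(bi+cj+dk,\ -j):b^2+c^2+d^2=1\}$. A symmetric loop is a continuous $2\pi$-periodic map $W:\mathbb R\to SO(4)$ with $wW(k)w^{-1}=W(-k)^{-1}$ for all $k$. A symmetric homotopy is a continuous $H:\mathbb R\times[0,1]\to SO(4)$ such that $H(\cdot,t)$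 is a symmetric loop for every $t$; two symmetric loops are symmetrically homotopic if they are $H(\cdot,0)$ and $H(\cdot,1)$ for some symmetric homotopy. A lift of $W$ is a continuous $\tilde W:\mathbb R\to Sp(1)\times Sp(1)$ with $p\circ\tilde W=W$. (Physically this is the case of vanishing Fu–Kane–Mele invariant and nonzero partial polarization $\nu_{\Gamma Y}$.) *)

theory Defs
  imports "HOL-Analysis.Analysis"
begin

text \<open>Quaternions identified with real^4: x0 + x1 i + x2 j + x3 k = vector [x0,x1,x2,x3].\<close>

definition qmult :: "real^4 \<Rightarrow> real^4 \<Rightarrow> real^4" where
  "qmult a b = vector
     [a$1*b$1 - a$2*b$2 - a$3*b$3 - a$4*b$4,
      a$1*b$2 + a$2*b$1 + a$3*b$4 - a$4*b$3,
      a$1*b$3 - a$2*b$4 + a$3*b$1 + a$4*b$2,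
      a$1*b$4 + a$2*b$3 - a$3*b$2 + a$4*b$1]"

definition qcnj :: "real^4 \<Rightarrow> real^4" where
  "qcnj a = vector [a$1, - a$2, - a$3, - a$4]"

definition qinv :: "real^4 \<Rightarrow> real^4" where
  "qinv a = (1 / (norm a)^2) *\<^sub>R qcnj a"

definition q1 :: "real^4" where "q1 = vector [1,0,0,0]"
definition qj :: "real^4" where "qj = vector [0,0,1,0]"

definition Sp1 :: "(real^4) set" where "Sp1 = {g. norm g = 1}"

definition SO4 :: "(real^4^4) set" where
  "SO4 = {A. orthogonal_matrix A \<and> det A = 1}"

definition pmap :: "(real^4) \<times> (real^4) \<Rightarrow> real^4^4" where
  "pmap gh = matrix (\<lambda>x. qmult (qmult (qinv (fst gh)) x) (snd gh))"

definition wmat :: "real^4^4" where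
  "wmat = vector [vector [0,0,-1,0], vector [0,0,0,-1],
                  vector [1,0,0,0], vector [0,1,0,0]]"

definition Tmap :: "(real^4) \<times> (real^4) \<Rightarrow> (real^4) \<times> (real^4)" where
  "Tmap uv = (qcnj (fst uv), qmult (qmult (qinv qj) (qcnj (snd uv))) qj)"

definition X1 :: "((real^4) \<times> (real^4)) set" where
  "X1 = {(vector [0,b,c,d], qj) | b c d. b^2 + c^2 + d^2 = 1}"

definition Y1 :: "((real^4) \<times> (real^4)) set" where
  "Y1 = {(vector [0,b,c,d], - qj) | b c d. b^2 + c^2 + d^2 = 1}"

definition symmetric_loop :: "(real \<Rightarrow> real^4^4) \<Rightarrow> bool" where
  "symmetric_loop W \<longleftrightarrow>
     continuous_on UNIV W \<and> W ` UNIV \<subseteq> SO4 \<and>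
     (\<forall>k. W (k + 2*pi) = W k) \<and>
     (\<forall>k. wmat ** W k ** matrix_inv wmat = matrix_inv (W (-k)))"

definition symmetric_homotopy :: "(real \<times> real \<Rightarrow> real^4^4) \<Rightarrow> bool" where
  "symmetric_homotopy H \<longleftrightarrow>
     continuous_on (UNIV \<times> {0..1}) H \<and> (\<forall>t\<in>{0..1}. symmetric_loop (\<lambda>k. H (k, t)))"

definition sym_homotopic :: "(real \<Rightarrow> real^4^4) \<Rightarrow> (real \<Rightarrow> real^4^4) \<Rightarrow> bool" where
  "sym_homotopic W V \<longleftrightarrow>
     (\<exists>H. symmetric_homotopy H \<and> (\<forall>k. H (k,0) = W k) \<and> (\<forall>k. H (k,1) = V k))"

definition null_homotopic_loop :: "(real \<Rightarrow> real^4^4) \<Rightarrow> bool" where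
  "null_homotopic_loop W \<longleftrightarrow>
     homotopic_loops SO4 (\<lambda>t. W (2*pi*t)) (linepath (W 0) (W 0))"

definition is_lift :: "(real \<Rightarrow> (real^4) \<times> (real^4)) \<Rightarrow> (real \<Rightarrow> real^4^4) \<Rightarrow> bool" where
  "is_lift Wt W \<longleftrightarrow> continuous_on UNIV Wt \<and> Wt ` UNIV \<subseteq> Sp1 \<times> Sp1 \<and> (\<forall>k. pmap (Wt k) = W k)"

definition diag1m1 :: "real^4^4" where
  "diag1m1 = vector [vector [1,0,0,0], vector [0,-1,0,0],
                     vector [0,0,1,0], vector [0,0,0,-1]]"

end

theory Submission
  imports Defs
begin

lemma vector4 [simp]:
  "(vector [a,b,c,d] :: ('a::zero)^4) $ 1 = a"
  "(vector [a,b,c,d] :: ('a::zero)^4) $ 2 = b"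
  "(vector [a,b,c,d] :: ('a::zero)^4) $ 3 = c"
  "(vector [a,b,c,d] :: ('a::zero)^4) $ 4 = d"
  unfolding vector_def by simp_all

lemma vec4_eq_iff: "(x::'a^4) = y \<longleftrightarrow> x$1 = y$1 \<and> x$2 = y$2 \<and> x$3 = y$3 \<and> x$4 = y$4"
  by (auto simp: vec_eq_iff forall_4)

lemma qmult_nth [simp]:
  "qmult a b $ 1 = a$1*b$1 - a$2*b$2 - a$3*b$3 - a$4*b$4"
  "qmult a b $ 2 = a$1*b$2 + a$2*b$1 + a$3*b$4 - a$4*b$3"
  "qmult a b $ 3 = a$1*b$3 - a$2*b$4 + a$3*b$1 + a$4*b$2"
  "qmult a b $ 4 = a$1*b$4 + a$2*b$3 - a$3*b$2 + a$4*b$1"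
  by (simp_all add: qmult_def)

lemma qcnj_nth [simp]:
  "qcnj a $ 1 = a$1" "qcnj a $ 2 = - a$2" "qcnj a $ 3 = - a$3" "qcnj a $ 4 = - a$4"
  by (simp_all add: qcnj_def)

lemma q1_nth [simp]: "q1$1 = 1" "q1$2 = 0" "q1$3 = 0" "q1$4 = 0"
  by (simp_all add: q1_def)
lemma qj_nth [simp]: "qj$1 = 0" "qj$2 = 0" "qj$3 = 1" "qj$4 = 0"
  by (simp_all add: qj_def)

lemma inner4: "(x::real^4) \<bullet> y = x$1*y$1 + x$2*y$2 + x$3*y$3 + x$4*y$4"
  by (simp add: inner_vec_def sum_4)

lemma norm4sq: "(norm (x::real^4))^2 = x$1^2 + x$2^2 + x$3^2 + x$4^2"
  by (simp only: power2_norm_eq_inner inner4) (simp add: power2_eq_square)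

lemma qmult_assoc: "qmult (qmult a b) c = qmult a (qmult b c)"
  by (simp add: vec4_eq_iff algebra_simps)

lemma qmult_q1 [simp]: "qmult q1 a = a" "qmult a q1 = a"
  by (simp_all add: vec4_eq_iff)

lemma qcnj_qcnj [simp]: "qcnj (qcnj a) = a" by (simp add: vec4_eq_iff)
lemma qcnj_qmult: "qcnj (qmult a b) = qmult (qcnj b) (qcnj a)"
  by (simp add: vec4_eq_iff algebra_simps)
lemma norm_qcnj [simp]: "norm (qcnj a) = norm a"
proof -
  have "(norm (qcnj a))^2 = (norm a)^2" by (simp add: norm4sq)
  then show ?thesis by (simp add: power2_eq_iff_nonneg)
qed

lemma norm_qmult: "norm (qmult a b) = norm a * norm b"
proof -
  have "(norm (qmult a b))^2 = (norm a * norm b)^2"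
    unfolding power_mult_distrib norm4sq by (simp add: power2_eq_square) algebra
  then show ?thesis by (simp add: power2_eq_iff_nonneg)
qed

lemma unit_sq: "norm (a::real^4) = 1 \<Longrightarrow> a$1^2 + a$2^2 + a$3^2 + a$4^2 = 1"
  using norm4sq[of a] by simp

lemma qmult_cnj_unit:
  assumes "norm a = 1"
  shows "qmult a (qcnj a) = q1" "qmult (qcnj a) a = q1"
  using unit_sq[OF assms] by (simp_all add: vec4_eq_iff power2_eq_square algebra_simps)

lemma qinv_unit: "norm a = 1 \<Longrightarrow> qinv a = qcnj a"
  by (simp add: qinv_def)

lemma qmult_add_left: "qmult (x + y) b = qmult x b + qmult y b"
  and qmult_add_right: "qmult a (x + y) = qmult a x + qmult a y"
  and qmult_scale_left: "qmult (c *\<^sub>R x) b = c *\<^sub>R qmult x b"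
  and qmult_scale_right: "qmult a (c *\<^sub>R y) = c *\<^sub>R qmult a y"
  and qmult_neg_left: "qmult (- x) b = - qmult x b"
  and qmult_neg_right: "qmult a (- y) = - qmult a y"
  and qmult_zero: "qmult 0 b = 0" "qmult a 0 = 0"
  by (simp_all add: vec4_eq_iff algebra_simps)

lemma qcnj_add: "qcnj (x + y) = qcnj x + qcnj y"
  and qcnj_scale: "qcnj (c *\<^sub>R x) = c *\<^sub>R qcnj x"
  and qcnj_neg: "qcnj (- x) = - qcnj x"
  by (simp_all add: vec4_eq_iff)

lemma linear_qmult2: "linear (\<lambda>x. qmult (qmult g x) h)"
  by (rule linearI) (simp_all add: qmult_add_left qmult_add_right qmult_scale_left qmult_scale_right)

lemma pmap_apply: "pmap (g,h) *v x = qmult (qmult (qinv g) x) h"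
  unfolding pmap_def using matrix_works[of "\<lambda>x. qmult (qmult (qinv g) x) h" x] linear_qmult2[of "qinv g" h]
  by (simp add: linear_def scalar_mult_eq_scaleR)

lemma norm_q1 [simp]: "norm q1 = 1" by (simp add: norm_eq_sqrt_inner inner4)
lemma norm_qj [simp]: "norm qj = 1" by (simp add: norm_eq_sqrt_inner inner4)
lemma qcnj_q1 [simp]: "qcnj q1 = q1" by (simp add: vec4_eq_iff)

lemma pmap_apply_unit: "norm g = 1 \<Longrightarrow> pmap (g,h) *v x = qmult (qmult (qcnj g) x) h"
  by (simp add: pmap_apply qinv_unit)

lemma pmap_mult:
  assumes "norm g = 1" "norm g' = 1"
  shows "pmap (g,h) ** pmap (g',h') = pmap (qmult g' g, qmult h' h)"
  using assms
  by (simp add: matrix_eq matrix_vector_mul_assoc[symmetric] pmap_apply_unit norm_qmult qcnj_qmult qmult_assoc)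

lemma pmap_one: "pmap (q1,q1) = mat 1"
  by (simp add: matrix_eq pmap_apply_unit)

lemma pmap_inv_mult:
  assumes "norm g = 1" "norm h = 1"
  shows "pmap (g,h) ** pmap (qcnj g, qcnj h) = mat 1" "pmap (qcnj g, qcnj h) ** pmap (g,h) = mat 1"
  using assms by (simp_all add: pmap_mult qmult_cnj_unit pmap_one)

lemma matrix_inv_eq:
  fixes A B :: "real^'n^'n"
  assumes "A ** B = mat 1"
  shows "matrix_inv A = B"
proof -
  have BA: "B ** A = mat 1" using assms matrix_left_right_inverse by blast
  have "\<exists>A'. A ** A' = mat 1 \<and> A' ** A = mat 1" using assms BA by blast
  then have C: "A ** matrix_inv A = mat 1 \<and> matrix_inv A ** A = mat 1"
    unfolding matrix_inv_def by (rule someI_ex)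
  have "matrix_inv A = matrix_inv A ** (A ** B)" by (simp add: assms)
  also have "\<dots> = B" using C by (simp add: matrix_mul_assoc)
  finally show ?thesis .
qed

lemma pmap_matrix_inv:
  assumes "norm g = 1" "norm h = 1"
  shows "matrix_inv (pmap (g,h)) = pmap (qcnj g, qcnj h)"
  using pmap_inv_mult[OF assms] by (intro matrix_inv_eq)

lemma pmap_neg: "pmap (- g, - h) = pmap (g,h)"
  by (simp add: matrix_eq pmap_apply qinv_def qcnj_neg qmult_neg_left qmult_neg_right qmult_scale_left)

lemma pmap_neg': "pmap (- x) = pmap x"
  using pmap_neg[of "fst x" "snd x"] by (cases x) simp

lemma pmap_orth:
  assumes "norm g = 1" "norm h = 1"
  shows "orthogonal_matrix (pmap (g,h))"
proof -
  have "orthogonal_transformation (\<lambda>x. pmap (g,h) *v x)"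
    unfolding orthogonal_transformation
    using assms by (simp add: pmap_apply_unit norm_qmult matrix_vector_mul_linear)
  then show ?thesis
    using orthogonal_transformation_matrix[of "\<lambda>x. pmap (g,h) *v x"] by simp
qed

lemma continuous_on_qmult [continuous_intros]:
  assumes "continuous_on S f" "continuous_on S g"
  shows "continuous_on S (\<lambda>x. qmult (f x) (g x))"
proof -
  have e: "(\<lambda>x. qmult (f x) (g x)) = (\<lambda>x. \<chi> i. qmult (f x) (g x) $ i)" by (simp add: vec_eq_iff)
  have "continuous_on S (\<lambda>x. qmult (f x) (g x) $ i)" for i
    using exhaust_4[of i] by (elim disjE) (simp_all, (intro continuous_intros assms)+)
  then show ?thesis unfolding e by (intro continuous_on_vec_lambda)
qed

lemma continuous_on_qcnj [continuous_intros]: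
  assumes "continuous_on S f"
  shows "continuous_on S (\<lambda>x. qcnj (f x))"
proof -
  have e: "(\<lambda>x. qcnj (f x)) = (\<lambda>x. \<chi> i. qcnj (f x) $ i)" by (simp add: vec_eq_iff)
  have "continuous_on S (\<lambda>x. qcnj (f x) $ i)" for i
    using exhaust_4[of i] by (elim disjE) (simp_all, (intro continuous_intros assms)+)
  then show ?thesis unfolding e by (intro continuous_on_vec_lambda)
qed

lemma continuous_on_qinv [continuous_intros]:
  assumes "continuous_on S f" "\<And>x. x \<in> S \<Longrightarrow> f x \<noteq> 0"
  shows "continuous_on S (\<lambda>x. qinv (f x))"
  unfolding qinv_def using assms by (intro continuous_intros) auto

lemma pmap_entries: "pmap gh = (\<chi> i j. qmult (qmult (qinv (fst gh)) (axis j 1)) (snd gh) $ i)"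
  by (simp add: pmap_def matrix_def)

lemma continuous_on_pmap: "continuous_on (Sp1 \<times> Sp1) pmap"
proof -
  have "continuous_on (Sp1 \<times> Sp1) (\<lambda>gh. (\<chi> i j. qmult (qmult (qinv (fst gh)) (axis j 1)) (snd gh) $ i))"
    by (intro continuous_intros) (auto simp: Sp1_def)
  then show ?thesis unfolding pmap_entries[abs_def] .
qed

lemma continuous_det: "continuous_on S (det :: real^'n^'n \<Rightarrow> real)"
  unfolding det_def[abs_def] by (intro continuous_intros)

lemma connected_Sp1: "connected Sp1"
proof -
  have "Sp1 = sphere (0::real^4) 1" by (auto simp: Sp1_def)
  then show ?thesis using connected_sphere[of "0::real^4" 1] by simp
qed

lemma pmap_det:
  assumes "x \<in> Sp1 \<times> Sp1"
  shows "det (pmap x) = 1"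
proof -
  have cont: "continuous_on (Sp1 \<times> Sp1) (\<lambda>x. det (pmap x))"
    by (rule continuous_on_compose2[OF continuous_det continuous_on_pmap]) auto
  have pm: "\<forall>y\<in>Sp1 \<times> Sp1. det (pmap y) = 1 \<or> det (pmap y) = -1"
    using pmap_orth det_orthogonal_matrix by (force simp: Sp1_def)
  have con: "connected (Sp1 \<times> Sp1)" by (simp add: connected_Sp1 connected_Times)
  have q: "(q1,q1) \<in> Sp1 \<times> Sp1" by (simp add: Sp1_def)
  have "\<forall>y\<in>Sp1 \<times> Sp1. det (pmap y) = 1"
  proof (rule ccontr)
    assume "\<not> ?thesis"
    then obtain y where y: "y \<in> Sp1 \<times> Sp1" "det (pmap y) = -1" using pm by force
    have "connected ((\<lambda>x. det (pmap x)) ` (Sp1 \<times> Sp1))"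
      using connected_continuous_image[OF cont con] .
    moreover have "1 \<in> (\<lambda>x. det (pmap x)) ` (Sp1 \<times> Sp1)" using q by (force simp: pmap_one)
    moreover have "-1 \<in> (\<lambda>x. det (pmap x)) ` (Sp1 \<times> Sp1)" using y by force
    ultimately have "0 \<in> (\<lambda>x. det (pmap x)) ` (Sp1 \<times> Sp1)"
      using connected_contains_Icc[of "(\<lambda>x. det (pmap x)) ` (Sp1 \<times> Sp1)" "-1" 1] by force
    then show False using pm by force
  qed
  then show ?thesis using assms by blast
qed

lemma pmap_SO4: "x \<in> Sp1 \<times> Sp1 \<Longrightarrow> pmap x \<in> SO4"
  using pmap_det pmap_orth[of "fst x" "snd x"] by (cases x) (auto simp: SO4_def Sp1_def)

lemma unit_real_pm:
  assumes "norm u = 1" "u$2 = 0" "u$3 = 0" "u$4 = 0"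
  shows "u = q1 \<or> u = - q1"
proof -
  have "u$1^2 = 1" using unit_sq[OF assms(1)] assms by simp
  then have "u$1 = 1 \<or> u$1 = -1" by (simp add: power2_eq_1_iff)
  then show ?thesis using assms by (auto simp: vec4_eq_iff)
qed

lemma pmap_inj:
  assumes "norm g = 1" "norm h = 1" "norm g' = 1" "norm h' = 1"
    and eq: "pmap (g,h) = pmap (g',h')"
  shows "(g',h') = (g,h) \<or> (g',h') = - (g,h)"
proof -
  have E: "qmult (qmult (qcnj g) x) h = qmult (qmult (qcnj g') x) h'" for x
    using eq assms by (metis pmap_apply_unit)
  define u where "u = qmult g' (qcnj g)"
  have nu: "norm u = 1" using assms by (simp add: u_def norm_qmult)
  have U: "qmult (qmult u x) h = qmult x h'" for x
  proof -
    have "qmult (qmult u x) h = qmult g' (qmult (qmult (qcnj g) x) h)"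
      by (simp add: u_def qmult_assoc)
    also have "\<dots> = qmult g' (qmult (qmult (qcnj g') x) h')" by (simp add: E)
    also have "\<dots> = qmult x h'"
      using qmult_cnj_unit[OF assms(3)] by (simp flip: qmult_assoc)
    finally show ?thesis .
  qed
  have h': "h' = qmult u h" using U[of q1] by simp
  have C: "qmult u x = qmult x u" for x
  proof -
    have "qmult (qmult u x) h = qmult (qmult x u) h" using U[of x] by (simp add: h' qmult_assoc)
    then have "qmult (qmult (qmult u x) h) (qcnj h) = qmult (qmult (qmult x u) h) (qcnj h)" by simp
    then show ?thesis using qmult_cnj_unit[OF assms(2)] by (simp add: qmult_assoc)
  qed
  have "u$2 = 0" "u$3 = 0" "u$4 = 0"
    using C[of "vector [0,1,0,0]"] C[of "vector [0,0,1,0]"] by (auto simp: vec4_eq_iff)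
  then have "u = q1 \<or> u = - q1" using unit_real_pm nu by blast
  moreover have "g' = qmult u g"
    using qmult_cnj_unit[OF assms(1)] by (simp add: u_def qmult_assoc)
  ultimately show ?thesis using h' by (auto simp: qmult_neg_left)
qed

lemma pmap_inj':
  assumes "x \<in> Sp1 \<times> Sp1" "y \<in> Sp1 \<times> Sp1" "pmap x = pmap y"
  shows "y = x \<or> y = - x"
  using pmap_inj[of "fst x" "snd x" "fst y" "snd y"] assms by (cases x, cases y) (auto simp: Sp1_def)

lemma Tmap_eq: "Tmap (g,h) = (qcnj g, qmult (qmult (- qj) (qcnj h)) qj)"
  by (simp add: Tmap_def qinv_unit vec4_eq_iff)

lemma Tmap_neg: "Tmap (- x) = - Tmap x"
  by (cases x) (simp add: Tmap_eq vec4_eq_iff)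

lemma Tmap_Tmap: "Tmap (Tmap x) = x"
  by (cases x) (simp add: Tmap_eq vec4_eq_iff)

lemma Tmap_Sp1: "x \<in> Sp1 \<times> Sp1 \<Longrightarrow> Tmap x \<in> Sp1 \<times> Sp1"
  by (cases x) (auto simp: Tmap_eq Sp1_def norm_qmult)

lemma continuous_on_Tmap: "continuous_on S Tmap"
proof -
  have "Tmap = (\<lambda>x. (qcnj (fst x), qmult (qmult (- qj) (qcnj (snd x))) qj))"
    by (auto simp: Tmap_eq[symmetric])
  moreover have "continuous_on S (\<lambda>x. (qcnj (fst x), qmult (qmult (- qj) (qcnj (snd x))) qj))"
    by (intro continuous_intros)
  ultimately show ?thesis by metis
qed

lemma Fminus_iff:
  assumes "x \<in> Sp1 \<times> Sp1"
  shows "Tmap x = - x \<longleftrightarrow> x \<in> X1 \<union> Y1"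
proof -
  obtain g h where x: "x = (g,h)" by (cases x)
  have ng: "norm g = 1" and nh: "norm h = 1" using assms x by (auto simp: Sp1_def)
  show ?thesis
  proof
    assume "Tmap x = - x"
    then have a: "g$1 = 0" "h$1 = 0" "h$2 = 0" "h$4 = 0"
      by (auto simp: x Tmap_eq vec4_eq_iff)
    have "h$3^2 = 1" using unit_sq[OF nh] a by simp
    then have h3: "h$3 = 1 \<or> h$3 = -1" by (simp add: power2_eq_1_iff)
    have g: "g = vector [0, g$2, g$3, g$4]" using a by (simp add: vec4_eq_iff)
    have gs: "(g$2)^2 + (g$3)^2 + (g$4)^2 = 1" using unit_sq[OF ng] a by simp
    show "x \<in> X1 \<union> Y1"
      using h3
    proof
      assume "h$3 = 1"
      then have "h = qj" using a by (simp add: vec4_eq_iff)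
      then show ?thesis unfolding x X1_def using g gs by blast
    next
      assume "h$3 = -1"
      then have "h = - qj" using a by (simp add: vec4_eq_iff)
      then show ?thesis unfolding x Y1_def using g gs by blast
    qed
  next
    assume "x \<in> X1 \<union> Y1"
    then show "Tmap x = - x"
      by (auto simp: X1_def Y1_def Tmap_eq vec4_eq_iff)
  qed
qed

lemma X1_Sp1: "X1 \<subseteq> Sp1 \<times> Sp1" and Y1_Sp1: "Y1 \<subseteq> Sp1 \<times> Sp1"
  by (auto simp: X1_def Y1_def Sp1_def norm_eq_sqrt_inner inner4 norm_qj[unfolded norm_eq_sqrt_inner] power2_eq_square)

lemma X1_Y1_disj: "X1 \<inter> Y1 = {}"
  by (auto simp: X1_def Y1_def vec4_eq_iff)

lemma neg_Y1: "x \<in> Y1 \<Longrightarrow> - x \<in> X1"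
proof -
  assume "x \<in> Y1"
  then obtain b c d where "x = (vector [0,b,c,d], - qj)" "b^2+c^2+d^2 = 1" by (auto simp: Y1_def)
  then show "- x \<in> X1" unfolding X1_def
    by (intro CollectI exI[of _ "-b"] exI[of _ "-c"] exI[of _ "-d"]) (simp add: vec4_eq_iff)
qed

lemma wmat_pmap: "wmat = pmap (q1,qj)"
proof (rule matrix_eq[THEN iffD2], rule allI)
  fix x show "wmat *v x = pmap (q1,qj) *v x" unfolding pmap_apply_unit[OF norm_q1]
    by (simp add: vec4_eq_iff matrix_vector_mult_def sum_4 wmat_def)
qed

lemma diag_pmap: "diag1m1 = pmap (qj,qj)"
proof (rule matrix_eq[THEN iffD2], rule allI)
  fix x show "diag1m1 *v x = pmap (qj,qj) *v x" unfolding pmap_apply_unit[OF norm_qj]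
    by (simp add: vec4_eq_iff matrix_vector_mult_def sum_4 diag1m1_def)
qed

lemma sym_T:
  assumes "x \<in> Sp1 \<times> Sp1"
  shows "wmat ** pmap x ** matrix_inv wmat = matrix_inv (pmap (Tmap x))"
proof -
  obtain g h where x: "x = (g,h)" by (cases x)
  have ng: "norm g = 1" and nh: "norm h = 1" using assms x by (auto simp: Sp1_def)
  have n2: "norm (qmult (qmult (- qj) (qcnj h)) qj) = 1" using nh by (simp add: norm_qmult)
  have e: "qcnj (qmult (qmult (- qj) (qcnj h)) qj) = qmult (qmult (qcnj qj) h) qj"
    by (simp add: vec4_eq_iff algebra_simps)
  have "wmat ** pmap x ** matrix_inv wmat = pmap (g, qmult (qmult (qcnj qj) h) qj)"
    using ng by (simp add: x wmat_pmap pmap_matrix_inv pmap_mult norm_qmult qmult_assoc)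
  also have "\<dots> = matrix_inv (pmap (Tmap x))"
    using ng n2 by (simp add: x Tmap_eq pmap_matrix_inv e)
  finally show ?thesis .
qed

definition qi :: "real^4" where "qi = vector [0,1,0,0]"
definition qk :: "real^4" where "qk = vector [0,0,0,1]"

lemma qi_nth [simp]: "qi$1 = 0" "qi$2 = 1" "qi$3 = 0" "qi$4 = 0" by (simp_all add: qi_def)
lemma qk_nth [simp]: "qk$1 = 0" "qk$2 = 0" "qk$3 = 0" "qk$4 = 1" by (simp_all add: qk_def)

lemma orth_inner:
  assumes "orthogonal_matrix (A::real^'n^'n)"
  shows "(A *v x) \<bullet> (A *v y) = x \<bullet> y"
proof -
  have "orthogonal_transformation (\<lambda>x. A *v x)"
    using orthogonal_transformation_matrix[of "\<lambda>x. A *v x"] assms by simp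
  then show ?thesis by (simp add: orthogonal_transformation_def)
qed

lemma basis_decomp: "(x::real^4) = x$1 *\<^sub>R q1 + x$2 *\<^sub>R qi + x$3 *\<^sub>R qj + x$4 *\<^sub>R qk"
  by (simp add: vec4_eq_iff)

lemma mat_apply_basis:
  "B *v x = x$1 *\<^sub>R (B *v q1) + x$2 *\<^sub>R (B *v qi) + x$3 *\<^sub>R (B *v qj) + x$4 *\<^sub>R (B *v qk)"
  by (subst basis_decomp) (simp add: matrix_vector_right_distrib matrix_vector_mult_scaleR)

lemma rot1:
  assumes "norm u = 1" "u$1 = 0"
  shows "\<exists>g. norm g = 1 \<and> qmult u g = qmult g qi"
proof (cases "u = - qi")
  case True
  then show ?thesis by (intro exI[of _ qj]) (simp add: vec4_eq_iff)
next
  case False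
  define r where "r = u + qi"
  have r0: "r \<noteq> 0"
  proof
    assume "r = 0" then have "u = - qi" by (simp add: r_def eq_neg_iff_add_eq_0)
    with False show False by simp
  qed
  have us: "u$2^2 + u$3^2 + u$4^2 = 1" using unit_sq[OF assms(1)] assms(2) by simp
  have ur: "qmult u r = qmult r qi"
    using us assms(2) by (simp add: r_def vec4_eq_iff power2_eq_square algebra_simps)
  show ?thesis
    using r0 ur by (intro exI[of _ "(1 / norm r) *\<^sub>R r"]) (simp add: qmult_scale_left qmult_scale_right)
qed

lemma rot2:
  assumes "norm v = 1" "v$1 = 0" "v$2 = 0"
  shows "\<exists>g. norm g = 1 \<and> g$3 = 0 \<and> g$4 = 0 \<and> qmult v g = qmult g qj"
proof (cases "v$3 = -1")
  case True
  have "v$4 = 0" using unit_sq[OF assms(1)] assms True by (simp add: power2_eq_square)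
  then show ?thesis using True assms
    by (intro exI[of _ qi]) (simp add: vec4_eq_iff norm_eq_sqrt_inner inner4)
next
  case False
  define r :: "real^4" where "r = vector [1 + v$3, v$4, 0, 0]"
  have r0: "r \<noteq> 0" using False by (auto simp: r_def vec4_eq_iff)
  have vs: "v$3^2 + v$4^2 = 1" using unit_sq[OF assms(1)] assms by simp
  have ur: "qmult v r = qmult r qj"
    using vs assms by (simp add: r_def vec4_eq_iff power2_eq_square algebra_simps)
  show ?thesis
    using r0 ur by (intro exI[of _ "(1 / norm r) *\<^sub>R r"]) (simp add: qmult_scale_left qmult_scale_right r_def)
qed

lemma prod_4: "prod f (UNIV::4 set) = f 1 * f 2 * f 3 * f 4"
  unfolding UNIV_4 by (simp add: ac_simps)

definition Dm :: "real^4^4" where "Dm = (\<chi> i j. if i = j then (if i = 4 then -1 else 1) else 0)"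

lemma det_Dm: "det Dm = -1"
  by (subst det_diagonal) (auto simp: Dm_def prod_4)

lemma Dm_apply: "Dm *v x = vector [x$1, x$2, x$3, - x$4]"
  by (simp add: vec4_eq_iff matrix_vector_mult_def sum_4 Dm_def)

lemma orth_det_mul:
  fixes A B :: "real^'n^'n"
  assumes "orthogonal_matrix A \<and> det A = 1" "orthogonal_matrix B \<and> det B = 1"
  shows "orthogonal_matrix (A ** B) \<and> det (A ** B) = 1"
  using assms by (intro conjI orthogonal_matrix_mul) (simp_all add: det_mul)

lemma pmap_orth_det: "norm g = 1 \<Longrightarrow> norm h = 1 \<Longrightarrow> orthogonal_matrix (pmap (g,h)) \<and> det (pmap (g,h)) = 1"
  using pmap_orth pmap_det by (auto simp: Sp1_def)

lemma pmap_surj: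
  assumes A: "A \<in> SO4"
  shows "\<exists>x \<in> Sp1 \<times> Sp1. pmap x = A"
proof -
  have oA: "orthogonal_matrix A" "det A = 1" using A by (auto simp: SO4_def)
  define q where "q = A *v q1"
  have nq: "norm q = 1"
    using orth_inner[OF oA(1), of q1 q1] by (simp add: q_def norm_eq_sqrt_inner inner4)
  define B1 where "B1 = pmap (q1, qcnj q) ** A"
  have oB1: "orthogonal_matrix B1 \<and> det B1 = 1"
    unfolding B1_def using nq oA by (intro orth_det_mul pmap_orth_det) auto
  have B1_1: "B1 *v q1 = q1"
    using nq by (simp add: B1_def matrix_vector_mul_assoc[symmetric] pmap_apply_unit q_def[symmetric] qmult_cnj_unit)
  define u where "u = B1 *v qi"
  have nu: "norm u = 1"
    using orth_inner[of B1 qi qi] oB1 by (simp add: u_def norm_eq_sqrt_inner inner4)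
  have u1: "u$1 = 0"
    using orth_inner[of B1 qi q1] oB1 B1_1 by (simp add: u_def inner4)
  obtain g1 where g1: "norm g1 = 1" "qmult u g1 = qmult g1 qi" using rot1[OF nu u1] by blast
  define B2 where "B2 = pmap (g1, g1) ** B1"
  have oB2: "orthogonal_matrix B2 \<and> det B2 = 1"
    unfolding B2_def using g1 oB1 by (intro orth_det_mul pmap_orth_det) auto
  have B2_1: "B2 *v q1 = q1"
    using g1 by (simp add: B2_def matrix_vector_mul_assoc[symmetric] pmap_apply_unit B1_1 qmult_cnj_unit)
  have B2_i: "B2 *v qi = qi"
  proof -
    have "B2 *v qi = qmult (qmult (qcnj g1) u) g1"
      using g1 by (simp add: B2_def matrix_vector_mul_assoc[symmetric] pmap_apply_unit u_def)
    also have "\<dots> = qi" using g1 by (simp add: qmult_assoc flip: qmult_assoc[of "qcnj g1" g1] add: qmult_cnj_unit)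
    finally show ?thesis .
  qed
  define v where "v = B2 *v qj"
  have nv: "norm v = 1"
    using orth_inner[of B2 qj qj] oB2 by (simp add: v_def norm_eq_sqrt_inner inner4)
  have v1: "v$1 = 0"
    using orth_inner[of B2 qj q1] oB2 B2_1 by (simp add: v_def inner4)
  have v2: "v$2 = 0"
    using orth_inner[of B2 qj qi] oB2 B2_i by (simp add: v_def inner4)
  obtain g2 where g2: "norm g2 = 1" "g2$3 = 0" "g2$4 = 0" "qmult v g2 = qmult g2 qj"
    using rot2[OF nv v1 v2] by blast
  define B3 where "B3 = pmap (g2, g2) ** B2"
  have oB3: "orthogonal_matrix B3 \<and> det B3 = 1"
    unfolding B3_def using g2 oB2 by (intro orth_det_mul pmap_orth_det) auto
  have B3_1: "B3 *v q1 = q1"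
    using g2 by (simp add: B3_def matrix_vector_mul_assoc[symmetric] pmap_apply_unit B2_1 qmult_cnj_unit)
  have B3_i: "B3 *v qi = qi"
  proof -
    have gs: "g2$1^2 + g2$2^2 = 1" using unit_sq[OF g2(1)] g2 by simp
    show ?thesis
      using g2 gs by (simp add: B3_def matrix_vector_mul_assoc[symmetric] pmap_apply_unit B2_i vec4_eq_iff power2_eq_square algebra_simps)
  qed
  have B3_j: "B3 *v qj = qj"
  proof -
    have "B3 *v qj = qmult (qmult (qcnj g2) v) g2"
      using g2 by (simp add: B3_def matrix_vector_mul_assoc[symmetric] pmap_apply_unit v_def)
    also have "\<dots> = qj" using g2 by (simp add: qmult_assoc flip: qmult_assoc[of "qcnj g2" g2] add: qmult_cnj_unit)
    finally show ?thesis .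
  qed
  define w where "w = B3 *v qk"
  have nw: "norm w = 1"
    using orth_inner[of B3 qk qk] oB3 by (simp add: w_def norm_eq_sqrt_inner inner4)
  have w123: "w$1 = 0" "w$2 = 0" "w$3 = 0"
    using orth_inner[of B3 qk q1] orth_inner[of B3 qk qi] orth_inner[of B3 qk qj] oB3 B3_1 B3_i B3_j
    by (simp_all add: w_def inner4)
  have "w$4^2 = 1" using unit_sq[OF nw] w123 by simp
  then have w4: "w$4 = 1 \<or> w$4 = -1" by (simp add: power2_eq_1_iff)
  have B3_app: "B3 *v x = x$1 *\<^sub>R q1 + x$2 *\<^sub>R qi + x$3 *\<^sub>R qj + x$4 *\<^sub>R w" for x
    using mat_apply_basis[of B3 x] B3_1 B3_i B3_j by (simp add: w_def)
  have "w$4 = 1"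
  proof (rule ccontr)
    assume "w$4 \<noteq> 1"
    then have "w$4 = -1" using w4 by simp
    then have "B3 = Dm"
      by (simp add: matrix_eq B3_app Dm_apply vec4_eq_iff w123)
    then show False using oB3 det_Dm by simp
  qed
  then have "B3 = mat 1"
    by (simp add: matrix_eq B3_app vec4_eq_iff w123)
  define z1 where "z1 = qmult q1 (qmult g1 g2)"
  define z2 where "z2 = qmult (qcnj q) (qmult g1 g2)"
  have nz: "norm z1 = 1" "norm z2 = 1" using nq g1 g2 by (simp_all add: z1_def z2_def norm_qmult)
  have "B3 = pmap (z1, z2) ** A"
    using g1 g2 nq by (simp add: B3_def B2_def B1_def matrix_mul_assoc pmap_mult norm_qmult z1_def z2_def qmult_assoc)
  then have "pmap (z1,z2) ** A = mat 1" using \<open>B3 = mat 1\<close> by simp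
  then have "pmap (qcnj z1, qcnj z2) ** (pmap (z1,z2) ** A) = pmap (qcnj z1, qcnj z2)" by simp
  then have "A = pmap (qcnj z1, qcnj z2)"
    using pmap_inv_mult(2)[OF nz] by (metis matrix_mul_assoc matrix_mul_lid)
  then show ?thesis using nz by (intro bexI[of _ "(qcnj z1, qcnj z2)"]) (auto simp: Sp1_def)
qed

definition Nmat :: "real^4^4 \<Rightarrow> real^4^4" where
  "Nmat A = vector [vector [(A$1$1 + A$2$2 + A$3$3 + A$4$4) / 4, (- A$1$2 + A$2$1 + A$3$4 - A$4$3) / 4, (- A$1$3 - A$2$4 + A$3$1 + A$4$2) / 4, (- A$1$4 + A$2$3 - A$3$2 + A$4$1) / 4], vector [(A$1$2 - A$2$1 + A$3$4 - A$4$3) / 4, (A$1$1 + A$2$2 - A$3$3 - A$4$4) / 4, (- A$1$4 + A$2$3 + A$3$2 - A$4$1) / 4, (A$1$3 + A$2$4 + A$3$1 + A$4$2) / 4], vector [(A$1$3 - A$2$4 - A$3$1 + A$4$2) / 4, (A$1$4 + A$2$3 + A$3$2 + A$4$1) / 4, (A$1$1 - A$2$2 + A$3$3 - A$4$4) / 4, (- A$1$2 - A$2$1 + A$3$4 + A$4$3) / 4], vector [(A$1$4 + A$2$3 - A$3$2 - A$4$1) / 4, (- A$1$3 + A$2$4 - A$3$1 + A$4$2) / 4, (A$1$2 + A$2$1 + A$3$4 + A$4$3) / 4, (A$1$1 - A$2$2 - A$3$3 + A$4$4) / 4]]"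

lemma axis_nth4: "(axis i (1::real) :: real^4) $ j = (if j = i then 1 else 0)"
  by (simp add: axis_def)

lemma Nmat_pmap:
  assumes "norm g = 1"
  shows "Nmat (pmap (g,h)) = (\<chi> c d. g$c * h$d)"
  using assms unfolding Nmat_def pmap_entries
  by (simp add: vec4_eq_iff qinv_unit axis_nth4 algebra_simps)

lemma Nmat_apply:
  assumes "norm g = 1"
  shows "Nmat (pmap (g,h)) *v y = (h \<bullet> y) *\<^sub>R g"
    "transpose (Nmat (pmap (g,h))) *v y = (g \<bullet> y) *\<^sub>R h"
  using assms by (simp_all add: Nmat_pmap vec4_eq_iff matrix_vector_mult_def sum_4 inner4 transpose_def algebra_simps)

lemma Nmat_apply3:
  assumes "norm g = 1"
  shows "y v* Nmat (pmap (g,h)) = (g \<bullet> y) *\<^sub>R h"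
  using assms by (simp add: Nmat_pmap vec4_eq_iff vector_matrix_mult_def sum_4 inner4 algebra_simps)

lemma linear_Nmat: "linear Nmat"
  by (rule linearI) (simp_all add: Nmat_def vec4_eq_iff algebra_simps add_divide_distrib diff_divide_distrib)

lemma continuous_mvmult [continuous_intros]:
  "continuous_on S f \<Longrightarrow> continuous_on S g \<Longrightarrow> continuous_on S (\<lambda>x. (f x :: real^'n^'m) *v g x)"
  unfolding matrix_vector_mult_def by (intro continuous_intros)

lemma continuous_Nmat: "continuous_on S Nmat"
  using linear_Nmat linear_continuous_on linear_conv_bounded_linear by blast

lemma continuous_Nmat' [continuous_intros]: "continuous_on S f \<Longrightarrow> continuous_on S (\<lambda>x. Nmat (f x))"
  using continuous_on_compose2[OF continuous_Nmat[of UNIV]] by blast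

definition recg :: "real^4 \<Rightarrow> real^4 \<Rightarrow> real^4^4 \<Rightarrow> real^4" where
  "recg g0 h0 A = ((g0 \<bullet> (Nmat A *v h0)) / \<bar>g0 \<bullet> (Nmat A *v h0)\<bar> / norm (Nmat A *v h0)) *\<^sub>R (Nmat A *v h0)"

definition recm :: "real^4 \<Rightarrow> real^4 \<Rightarrow> real^4^4 \<Rightarrow> (real^4) \<times> (real^4)" where
  "recm g0 h0 A = (recg g0 h0 A, transpose (Nmat A) *v recg g0 h0 A)"

definition Tset :: "real^4 \<Rightarrow> real^4 \<Rightarrow> (real^4^4) set" where
  "Tset g0 h0 = {A \<in> SO4. g0 \<bullet> (Nmat A *v h0) \<noteq> 0}"

lemma unit_inner_self: "norm (g::real^4) = 1 \<Longrightarrow> g \<bullet> g = 1"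
  by (simp add: power2_norm_eq_inner[symmetric])

lemma recm_pmap:
  assumes g: "norm g = 1" and h: "norm h = 1" and nz: "(g \<bullet> g0) * (h \<bullet> h0) \<noteq> 0"
  shows "recm g0 h0 (pmap (g,h)) = (if g \<bullet> g0 > 0 then (g,h) else (-g,-h))"
proof -
  define a where "a = g \<bullet> g0"
  define b where "b = h \<bullet> h0"
  have a0: "a \<noteq> 0" and b0: "b \<noteq> 0" using nz by (auto simp: a_def b_def)
  have w: "Nmat (pmap (g,h)) *v h0 = b *\<^sub>R g" using Nmat_apply(1)[OF g] by (simp add: b_def inner_commute)
  have e: "g0 \<bullet> (b *\<^sub>R g) = b * a" by (simp add: a_def inner_commute)
  have rg: "recg g0 h0 (pmap (g,h)) = ((b * a) / \<bar>b * a\<bar> / \<bar>b\<bar> * b) *\<^sub>R g"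
    unfolding recg_def w e using g by simp
  have c: "(b * a) / \<bar>b * a\<bar> / \<bar>b\<bar> * b = (if a > 0 then 1 else -1)"
  proof -
    have "a > 0 \<or> a < 0" "b > 0 \<or> b < 0" using a0 b0 by auto
    then show ?thesis
    proof (elim disjE)
      assume "a > 0" "b > 0" then show ?thesis by simp
    next
      assume "a > 0" "b < 0"
      then have "\<bar>b * a\<bar> = - (b * a)" "\<bar>b\<bar> = - b" by (simp_all add: abs_of_neg mult_neg_pos)
      then show ?thesis using \<open>a > 0\<close> \<open>b < 0\<close> by simp
    next
      assume "a < 0" "b > 0"
      then have "\<bar>b * a\<bar> = - (b * a)" "\<bar>b\<bar> = b" by (simp_all add: abs_of_neg mult_pos_neg)
      then show ?thesis using \<open>a < 0\<close> \<open>b > 0\<close> by simp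
    next
      assume "a < 0" "b < 0"
      then have "\<bar>b * a\<bar> = b * a" "\<bar>b\<bar> = - b" by (simp_all add: abs_of_pos mult_neg_neg)
      then show ?thesis using \<open>a < 0\<close> \<open>b < 0\<close> by simp
    qed
  qed
  have gg: "g \<bullet> g = 1" using unit_inner_self[OF g] .
  show ?thesis
    using c gg by (auto simp: recm_def rg Nmat_apply3[OF g] a_def)
qed

lemma continuous_on_transpose [continuous_intros]:
  "continuous_on S f \<Longrightarrow> continuous_on S (\<lambda>x. transpose (f x :: real^'n^'m))"
  unfolding transpose_def by (intro continuous_intros)

lemma continuous_recm: "continuous_on (Tset g0 h0) (recm g0 h0)"
proof -
  have c1: "continuous_on (Tset g0 h0) (\<lambda>A. Nmat A *v h0)"
    by (intro continuous_intros)
  have nz: "A \<in> Tset g0 h0 \<Longrightarrow> Nmat A *v h0 \<noteq> 0" for A by (auto simp: Tset_def)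
  have c2: "continuous_on (Tset g0 h0) (recg g0 h0)"
    unfolding recg_def[abs_def] using nz by (intro continuous_intros c1) (auto simp: Tset_def)
  have c3: "continuous_on (Tset g0 h0) Nmat" by (rule continuous_Nmat)
  show ?thesis unfolding recm_def[abs_def]
    by (intro continuous_intros c2 c3)
qed

lemma pmap_Nmat_inner:
  assumes "x \<in> Sp1 \<times> Sp1"
  shows "g0 \<bullet> (Nmat (pmap x) *v h0) = (fst x \<bullet> g0) * (snd x \<bullet> h0)"
proof -
  obtain g h where x: "x = (g,h)" by (cases x)
  have "norm g = 1" using assms x by (auto simp: Sp1_def)
  then show ?thesis by (simp add: x Nmat_apply inner_commute)
qed

lemma pmap_covering: "covering_space (Sp1 \<times> Sp1) pmap SO4"
proof (rule covering_spaceI)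
  show "continuous_on (Sp1 \<times> Sp1) pmap" by (rule continuous_on_pmap)
  show "pmap ` (Sp1 \<times> Sp1) = SO4" using pmap_SO4 pmap_surj by blast
next
  fix A assume A: "A \<in> SO4"
  then obtain x0 where x0: "x0 \<in> Sp1 \<times> Sp1" "pmap x0 = A" using pmap_surj by blast
  obtain g0 h0 where gh0: "x0 = (g0,h0)" by (cases x0)
  have ng0: "norm g0 = 1" and nh0: "norm h0 = 1" using x0 gh0 by (auto simp: Sp1_def)
  define S where "S = Sp1 \<times> Sp1"
  define T where "T = Tset g0 h0"
  define f1 where "f1 = (\<lambda>x::(real^4)\<times>(real^4). (fst x \<bullet> g0) * (snd x \<bullet> h0))"
  define f2 where "f2 = (\<lambda>x::(real^4)\<times>(real^4). fst x \<bullet> g0)"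
  define Up where "Up = {x \<in> S. f1 x \<noteq> 0 \<and> f2 x > 0}"
  define Um where "Um = {x \<in> S. f1 x \<noteq> 0 \<and> f2 x < 0}"
  have TS: "x \<in> S \<Longrightarrow> pmap x \<in> T \<longleftrightarrow> f1 x \<noteq> 0" for x
    using pmap_SO4 pmap_Nmat_inner by (auto simp: T_def Tset_def S_def f1_def)
  have f1f2: "f1 x \<noteq> 0 \<Longrightarrow> f2 x \<noteq> 0" for x by (auto simp: f1_def f2_def)
  have AT: "A \<in> T"
    using TS[of x0] x0 gh0 ng0 nh0 by (auto simp: S_def f1_def unit_inner_self)
  have oT: "openin (top_of_set SO4) T"
  proof -
    have "T = SO4 \<inter> (\<lambda>A. g0 \<bullet> (Nmat A *v h0)) -` (- {0})" by (auto simp: T_def Tset_def)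
    moreover have "continuous_on SO4 (\<lambda>A. g0 \<bullet> (Nmat A *v h0))"
      by (intro continuous_intros)
    ultimately show ?thesis using continuous_openin_preimage_gen[of SO4 _ "- {0}"] by auto
  qed
  have cf1: "continuous_on S f1" and cf2: "continuous_on S f2"
    unfolding f1_def f2_def by (intro continuous_intros)+
  have oUp: "openin (top_of_set S) Up"
  proof -
    have "Up = (S \<inter> f1 -` (- {0})) \<inter> (S \<inter> f2 -` {0<..})" by (auto simp: Up_def)
    then show ?thesis
      using continuous_openin_preimage_gen[OF cf1, of "- {0}"] continuous_openin_preimage_gen[OF cf2, of "{0<..}"]
      by auto
  qed
  have oUm: "openin (top_of_set S) Um"
  proof -
    have "Um = (S \<inter> f1 -` (- {0})) \<inter> (S \<inter> f2 -` {..<0})" by (auto simp: Um_def)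
    then show ?thesis
      using continuous_openin_preimage_gen[OF cf1, of "- {0}"] continuous_openin_preimage_gen[OF cf2, of "{..<0}"]
      by auto
  qed
  have rec: "recm g0 h0 (pmap x) = (if f2 x > 0 then x else - x)" if "x \<in> S" "f1 x \<noteq> 0" for x
  proof -
    obtain g h where x: "x = (g,h)" by (cases x)
    have "norm g = 1" "norm h = 1" using that x by (auto simp: S_def Sp1_def)
    then show ?thesis using recm_pmap[of g h g0 h0] that by (simp add: x f1_def f2_def)
  qed
  have f1neg: "f1 (- x) = f1 x" for x by (simp add: f1_def)
  have f2neg: "f2 (- x) = - f2 x" for x by (simp add: f2_def)
  have Sneg: "x \<in> S \<Longrightarrow> - x \<in> S" for x by (cases x) (auto simp: S_def Sp1_def)
  have preT: "y \<in> T \<Longrightarrow> \<exists>x \<in> S. pmap x = y \<and> f1 x \<noteq> 0" for y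
    using pmap_surj TS by (fastforce simp: T_def Tset_def S_def)
  have homUp: "homeomorphism Up T pmap (recm g0 h0)"
  proof (unfold homeomorphism_def, intro conjI)
    show "\<forall>x\<in>Up. recm g0 h0 (pmap x) = x" using rec by (auto simp: Up_def)
    show "pmap ` Up = T"
    proof
      show "pmap ` Up \<subseteq> T" using TS by (auto simp: Up_def)
      show "T \<subseteq> pmap ` Up"
      proof
        fix y assume "y \<in> T"
        then obtain x where x: "x \<in> S" "pmap x = y" "f1 x \<noteq> 0" using preT by blast
        show "y \<in> pmap ` Up"
        proof (cases "f2 x > 0")
          case True then show ?thesis using x by (auto simp: Up_def)
        next
          case False
          then have "f2 (- x) > 0" using f1f2[OF x(3)] f2neg by (simp add: order_neq_le_trans)
          then show ?thesis using x Sneg[OF x(1)] f1neg[of x] pmap_neg'[of x] by (auto simp: Up_def intro!: image_eqI[of _ _ "- x"])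
        qed
      qed
    qed
    show "continuous_on Up pmap" using continuous_on_pmap by (rule continuous_on_subset) (auto simp: Up_def S_def)
    show "continuous_on T (recm g0 h0)" using continuous_recm by (simp add: T_def)
    show "\<forall>y\<in>T. pmap (recm g0 h0 y) = y"
    proof
      fix y assume "y \<in> T"
      then obtain x where x: "x \<in> S" "pmap x = y" "f1 x \<noteq> 0" using preT by blast
      show "pmap (recm g0 h0 y) = y" using rec[OF x(1,3)] x pmap_neg'[of x] by auto
    qed
    show "recm g0 h0 ` T = Up"
    proof
      show "recm g0 h0 ` T \<subseteq> Up"
      proof
        fix z assume "z \<in> recm g0 h0 ` T"
        then obtain y where "y \<in> T" "z = recm g0 h0 y" by blast
        then obtain x where x: "x \<in> S" "pmap x = y" "f1 x \<noteq> 0" "z = recm g0 h0 y" using preT by blast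
        show "z \<in> Up" using rec[OF x(1,3)] x f1f2[OF x(3)] f1neg f2neg Sneg
          by (auto simp: Up_def split: if_splits)
      qed
      show "Up \<subseteq> recm g0 h0 ` T"
        using rec TS by (force simp: Up_def)
    qed
  qed
  have homUm: "homeomorphism Um T pmap (\<lambda>y. - recm g0 h0 y)"
  proof (unfold homeomorphism_def, intro conjI)
    show "\<forall>x\<in>Um. - recm g0 h0 (pmap x) = x" using rec by (auto simp: Um_def)
    show "pmap ` Um = T"
    proof
      show "pmap ` Um \<subseteq> T" using TS by (auto simp: Um_def)
      show "T \<subseteq> pmap ` Um"
      proof
        fix y assume "y \<in> T"
        then obtain x where x: "x \<in> S" "pmap x = y" "f1 x \<noteq> 0" using preT by blast
        show "y \<in> pmap ` Um"
        proof (cases "f2 x < 0")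
          case True then show ?thesis using x by (auto simp: Um_def)
        next
          case False
          then have "f2 (- x) < 0" using f1f2[OF x(3)] f2neg by simp
          then show ?thesis using x Sneg[OF x(1)] f1neg[of x] pmap_neg'[of x] by (auto simp: Um_def intro!: image_eqI[of _ _ "- x"])
        qed
      qed
    qed
    show "continuous_on Um pmap" using continuous_on_pmap by (rule continuous_on_subset) (auto simp: Um_def S_def)
    show "continuous_on T (\<lambda>y. - recm g0 h0 y)" using continuous_recm by (intro continuous_intros) (simp add: T_def)
    show "\<forall>y\<in>T. pmap (- recm g0 h0 y) = y"
    proof
      fix y assume "y \<in> T"
      then obtain x where x: "x \<in> S" "pmap x = y" "f1 x \<noteq> 0" using preT by blast
      show "pmap (- recm g0 h0 y) = y" using rec[OF x(1,3)] x pmap_neg'[of x] pmap_neg'[of "- x"] by auto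
    qed
    show "(\<lambda>y. - recm g0 h0 y) ` T = Um"
    proof
      show "(\<lambda>y. - recm g0 h0 y) ` T \<subseteq> Um"
      proof
        fix z assume "z \<in> (\<lambda>y. - recm g0 h0 y) ` T"
        then obtain y where "y \<in> T" "z = - recm g0 h0 y" by blast
        then obtain x where x: "x \<in> S" "pmap x = y" "f1 x \<noteq> 0" "z = - recm g0 h0 y" using preT by blast
        show "z \<in> Um" using rec[OF x(1,3)] x f1f2[OF x(3)] f1neg f2neg Sneg
          by (auto simp: Um_def split: if_splits)
      qed
      show "Um \<subseteq> (\<lambda>y. - recm g0 h0 y) ` T"
      proof
        fix x assume x: "x \<in> Um"
        then have "pmap x \<in> T" "- recm g0 h0 (pmap x) = x" using TS rec by (auto simp: Um_def)
        then show "x \<in> (\<lambda>y. - recm g0 h0 y) ` T" by (metis image_eqI)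
      qed
    qed
  qed
  show "\<exists>T. A \<in> T \<and> openin (top_of_set SO4) T \<and>
             (\<exists>v. \<Union>v = (Sp1 \<times> Sp1) \<inter> pmap -` T \<and> (\<forall>u\<in>v. openin (top_of_set (Sp1 \<times> Sp1)) u) \<and>
                  pairwise disjnt v \<and> (\<forall>u\<in>v. \<exists>q. homeomorphism u T pmap q))"
  proof (intro exI conjI)
    show "A \<in> T" by (rule AT)
    show "openin (top_of_set SO4) T" by (rule oT)
    show "\<Union>{Up, Um} = (Sp1 \<times> Sp1) \<inter> pmap -` T"
      using TS f1f2 by (auto simp: Up_def Um_def S_def linorder_neq_iff)
    show "\<forall>u\<in>{Up, Um}. openin (top_of_set (Sp1 \<times> Sp1)) u" using oUp oUm by (simp add: S_def)
    show "pairwise disjnt {Up, Um}" by (auto simp: pairwise_def disjnt_def Up_def Um_def)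
    show "\<forall>u\<in>{Up, Um}. \<exists>q. homeomorphism u T pmap q" using homUp homUm by blast
  qed
qed

lemma is_liftD:
  assumes "is_lift L W"
  shows "continuous_on UNIV L" "L k \<in> Sp1 \<times> Sp1" "pmap (L k) = W k"
  using assms by (auto simp: is_lift_def)

lemma lift_SO4: "is_lift L W \<Longrightarrow> W k \<in> SO4"
proof -
  assume l: "is_lift L W"
  have "pmap (L k) \<in> SO4" by (rule pmap_SO4[OF is_liftD(2)[OF l]])
  then show ?thesis using is_liftD(3)[OF l] by simp
qed

lemma lift_contW: "is_lift L W \<Longrightarrow> continuous_on UNIV W"
proof -
  assume l: "is_lift L W"
  have "continuous_on UNIV (\<lambda>k. pmap (L k))"
    by (rule continuous_on_compose2[OF continuous_on_pmap is_liftD(1)[OF l]]) (use is_liftD(2)[OF l] in blast)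
  then show ?thesis using is_liftD(3)[OF l] by simp
qed

lemma lift_unique:
  assumes l1: "is_lift L1 W" and l2: "is_lift L2 W" and e: "L1 a = L2 a"
  shows "L1 x = L2 x"
proof (rule covering_space_lift_unique[OF pmap_covering, where f=W and T=UNIV and a=a])
  show "L1 a = L2 a" by (rule e)
  show "continuous_on UNIV W" by (rule lift_contW[OF l1])
  show "W \<in> UNIV \<rightarrow> SO4" using lift_SO4[OF l1] by blast
  show "continuous_on UNIV L1" "continuous_on UNIV L2" using is_liftD(1) l1 l2 by blast+
  show "L1 \<in> UNIV \<rightarrow> Sp1 \<times> Sp1" "L2 \<in> UNIV \<rightarrow> Sp1 \<times> Sp1" using is_liftD(2) l1 l2 by blast+
  show "\<And>x. x \<in> UNIV \<Longrightarrow> W x = pmap (L1 x)" using is_liftD(3)[OF l1] by simp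
  show "\<And>x. x \<in> UNIV \<Longrightarrow> W x = pmap (L2 x)" using is_liftD(3)[OF l2] by simp
qed simp_all

lemma SO4_inv: "A \<in> SO4 \<Longrightarrow> matrix_inv A = transpose A"
  by (intro matrix_inv_eq) (simp add: SO4_def orthogonal_matrix_def)

lemma SO4_inv_inj:
  assumes "A \<in> SO4" "B \<in> SO4" "matrix_inv A = matrix_inv B" shows "A = B"
proof -
  have "transpose A = transpose B" using assms SO4_inv by simp
  then have "transpose (transpose A) = transpose (transpose B)" by simp
  then show ?thesis by simp
qed

lemma sym_pmapT:
  assumes V: "symmetric_loop V" and x: "x \<in> Sp1 \<times> Sp1" and e: "pmap x = V k"
  shows "pmap (Tmap x) = V (-k)"
proof -
  have "wmat ** V k ** matrix_inv wmat = matrix_inv (V (-k))" using V by (simp add: symmetric_loop_def)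
  moreover have "wmat ** V k ** matrix_inv wmat = matrix_inv (pmap (Tmap x))" using sym_T[OF x] e by simp
  moreover have "V (-k) \<in> SO4" using V by (auto simp: symmetric_loop_def)
  moreover have "pmap (Tmap x) \<in> SO4" using x by (intro pmap_SO4 Tmap_Sp1)
  ultimately show ?thesis using SO4_inv_inj[of "V (-k)" "pmap (Tmap x)"] by simp
qed

lemma Sp1_neg: "x \<in> Sp1 \<times> Sp1 \<Longrightarrow> - x \<in> Sp1 \<times> Sp1"
  by (cases x) (auto simp: Sp1_def)

lemma lift_neg:
  assumes l: "is_lift L W" shows "is_lift (\<lambda>k. - L k) W"
  unfolding is_lift_def
proof (intro conjI)
  show "continuous_on UNIV (\<lambda>k. - L k)" using is_liftD(1)[OF l] by (intro continuous_intros)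
  show "range (\<lambda>k. - L k) \<subseteq> Sp1 \<times> Sp1" using is_liftD(2)[OF l] Sp1_neg by blast
  show "\<forall>k. pmap (- L k) = W k" using is_liftD(3)[OF l] by (simp add: pmap_neg')
qed

lemma lift_sym:
  assumes V: "symmetric_loop W" and l: "is_lift L W"
  shows "is_lift (\<lambda>k. - Tmap (L (-k))) W"
  unfolding is_lift_def
proof (intro conjI)
  have c1: "continuous_on UNIV (\<lambda>k. L (-k))"
    by (rule continuous_on_compose2[OF is_liftD(1)[OF l]]) (auto intro: continuous_intros)
  have "continuous_on UNIV (\<lambda>k. Tmap (L (-k)))"
    by (rule continuous_on_compose2[OF continuous_on_Tmap[of UNIV] c1]) simp
  then show "continuous_on UNIV (\<lambda>k. - Tmap (L (- k)))" by (intro continuous_intros)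
  show "range (\<lambda>k. - Tmap (L (- k))) \<subseteq> Sp1 \<times> Sp1"
  proof
    fix y assume "y \<in> range (\<lambda>k. - Tmap (L (- k)))"
    then obtain k where "y = - Tmap (L (- k))" by blast
    then show "y \<in> Sp1 \<times> Sp1" using Sp1_neg[OF Tmap_Sp1[OF is_liftD(2)[OF l]]] by simp
  qed
  show "\<forall>k. pmap (- Tmap (L (- k))) = W k"
  proof
    fix k
    have "pmap (Tmap (L (- k))) = W (- (- k))" by (rule sym_pmapT[OF V is_liftD(2,3)[OF l]])
    then show "pmap (- Tmap (L (- k))) = W k" by (simp add: pmap_neg')
  qed
qed

lemma fix_pm:
  assumes V: "symmetric_loop V" and x: "x \<in> Sp1 \<times> Sp1" and e: "pmap x = V k" and s: "V (-k) = V k"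
  shows "Tmap x = x \<or> Tmap x = - x"
proof -
  have "pmap x = pmap (Tmap x)" using sym_pmapT[OF V x e] s e by simp
  then show ?thesis using pmap_inj'[OF x Tmap_Sp1[OF x]] by blast
qed

lemma periodic_int:
  assumes P: "\<And>k. f (k + 2*pi) = f k"
  shows "f (k + 2*pi * of_int n) = f k"
proof (induct n rule: int_induct[where k=0])
  case base then show ?case by simp
next
  case (step1 i)
  have "k + 2*pi * of_int (i+1) = (k + 2*pi * of_int i) + 2*pi" by (simp add: algebra_simps)
  then have "f (k + 2*pi * of_int (i+1)) = f (k + 2*pi * of_int i)" by (simp only: P)
  also have "\<dots> = f k" by (rule step1(2))
  finally show ?case .
next
  case (step2 i)
  have "k + 2*pi * of_int i = (k + 2*pi * of_int (i - 1)) + 2*pi" by (simp add: algebra_simps)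
  then have "f (k + 2*pi * of_int i) = f (k + 2*pi * of_int (i - 1))" by (simp only: P)
  then show ?case using step2(2) by simp
qed

lemma const_two:
  fixes f :: "real \<Rightarrow> real"
  assumes c: "continuous_on {0..1} f" and v: "\<forall>t\<in>{0..1}. f t = a \<or> f t = b" and ab: "a \<noteq> b"
    and t: "t \<in> {0..1}"
  shows "f t = f 0"
proof (rule ccontr)
  assume ne: "f t \<noteq> f 0"
  have con: "connected (f ` {0..1})" by (rule connected_continuous_image[OF c]) simp
  have t0: "f t \<in> f ` {0..1}" "f 0 \<in> f ` {0..1}" using t by auto
  have "f t = a \<or> f t = b" "f 0 = a \<or> f 0 = b" using v t by auto
  then have ab_in: "a \<in> f ` {0..1} \<and> b \<in> f ` {0..1}" using t0 ne by auto
  have mid: "(a+b)/2 \<in> f ` {0..1}"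
  proof (cases "a \<le> b")
    case True
    then have "{a..b} \<subseteq> f ` {0..1}" using connected_contains_Icc[OF con] ab_in by blast
    then show ?thesis using True by (simp add: subset_eq)
  next
    case False
    then have "{b..a} \<subseteq> f ` {0..1}" using connected_contains_Icc[OF con] ab_in by blast
    then show ?thesis using False by (simp add: subset_eq)
  qed
  then obtain s where s: "s \<in> {0..1}" "f s = (a+b)/2" by (auto simp: image_iff)
  have "f s = a \<or> f s = b" using v s(1) by blast
  then show False using s(2) ab by auto
qed

lemma part_a:
  assumes V: "symmetric_loop W" and l: "is_lift Wt W" and w0: "Wt 0 \<in> X1 \<union> Y1"
  shows "- Tmap (Wt (-k)) = Wt k"
proof -
  have "Tmap (Wt 0) = - Wt 0" using Fminus_iff is_liftD(2)[OF l] w0 by blast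
  then have "- Tmap (Wt (-0)) = Wt 0" by simp
  then show ?thesis using lift_unique[OF lift_sym[OF V l] l] by blast
qed

lemma part_b:
  assumes V: "symmetric_loop W" and N: "null_homotopic_loop W" and l: "is_lift Wt W"
  shows "Wt (k + 2*pi) = Wt k"
proof -
  define g where "g = (\<lambda>t. W (2*pi*t))"
  have hp: "homotopic_paths SO4 g (linepath (W 0) (W 0))"
    using homotopic_loops_imp_homotopic_paths_null[of SO4 g] N
    by (simp add: null_homotopic_loop_def g_def pathstart_def)
  have ph: "path (\<lambda>t. Wt (2*pi*t))" unfolding path_def
    by (rule continuous_on_compose2[OF is_liftD(1)[OF l]]) (auto intro: continuous_intros)
  have hpp: "path g" "path_image g \<subseteq> SO4" "path (linepath (W 0) (W 0))" "path_image (linepath (W 0) (W 0)) \<subseteq> SO4"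
    using homotopic_paths_imp_path[OF hp] homotopic_paths_imp_subset[OF hp] by auto
  have "homotopic_paths (Sp1 \<times> Sp1) (\<lambda>t. Wt (2*pi*t)) (linepath (Wt 0) (Wt 0))"
  proof (rule covering_space_lift_homotopic_paths[OF pmap_covering hpp(1,2) hpp(3,4) hp ph])
    show "path_image (\<lambda>t. Wt (2 * pi * t)) \<subseteq> Sp1 \<times> Sp1"
      unfolding path_image_def using is_liftD(2)[OF l] by blast
    show "\<And>t. t \<in> {0..1} \<Longrightarrow> pmap (Wt (2 * pi * t)) = g t" using is_liftD(3)[OF l] by (simp add: g_def)
    show "path (linepath (Wt 0) (Wt 0))" by simp
    show "path_image (linepath (Wt 0) (Wt 0)) \<subseteq> Sp1 \<times> Sp1" using is_liftD(2)[OF l] by simp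
    show "\<And>t. t \<in> {0..1} \<Longrightarrow> pmap (linepath (Wt 0) (Wt 0) t) = linepath (W 0) (W 0) t"
      using is_liftD(3)[OF l] by (simp add: linepath_refl)
    show "pathstart (\<lambda>t. Wt (2 * pi * t)) = pathstart (linepath (Wt 0) (Wt 0))" by (simp add: pathstart_def)
  qed
  then have "Wt (2*pi) = Wt 0"
    using homotopic_paths_imp_pathfinish by (fastforce simp: pathfinish_def linepath_refl)
  moreover have "is_lift (\<lambda>k. Wt (k + 2*pi)) W"
    unfolding is_lift_def
  proof (intro conjI)
    show "continuous_on UNIV (\<lambda>k. Wt (k + 2 * pi))"
      by (rule continuous_on_compose2[OF is_liftD(1)[OF l]]) (auto intro: continuous_intros)
    show "range (\<lambda>k. Wt (k + 2 * pi)) \<subseteq> Sp1 \<times> Sp1" using is_liftD(2)[OF l] by blast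
    show "\<forall>k. pmap (Wt (k + 2 * pi)) = W k" using is_liftD(3)[OF l] V by (simp add: symmetric_loop_def)
  qed
  ultimately show ?thesis using lift_unique[of "\<lambda>k. Wt (k + 2*pi)" W Wt 0] l by simp
qed

lemma part_c:
  assumes V: "symmetric_loop W" and N: "null_homotopic_loop W" and l: "is_lift Wt W"
    and w0: "Wt 0 \<in> X1 \<union> Y1"
  shows "Wt pi \<in> X1 \<union> Y1"
proof -
  have "- Tmap (Wt (-pi)) = Wt pi" by (rule part_a[OF V l w0])
  moreover have "Wt (-pi) = Wt pi" using part_b[OF V N l, of "-pi"] by simp
  ultimately have "Tmap (Wt pi) = - Wt pi" by (metis minus_minus)
  then show ?thesis using Fminus_iff is_liftD(2)[OF l] by blast
qed

lemma continuous_Tmap' [continuous_intros]: "continuous_on S f \<Longrightarrow> continuous_on S (\<lambda>x. Tmap (f x))"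
  using continuous_on_compose2[OF continuous_on_Tmap[of UNIV]] by blast

definition phiT :: "(real^4) \<times> (real^4) \<Rightarrow> real" where
  "phiT x = fst (Tmap x) \<bullet> fst x + snd (Tmap x) \<bullet> snd x"

lemma phiT_vals:
  assumes "x \<in> Sp1 \<times> Sp1"
  shows "Tmap x = x \<Longrightarrow> phiT x = 2" "Tmap x = - x \<Longrightarrow> phiT x = -2"
  using assms unit_inner_self by (auto simp: phiT_def Sp1_def)

lemma psi_X1: "x \<in> X1 \<Longrightarrow> snd x $ 3 = 1" and psi_Y1: "x \<in> Y1 \<Longrightarrow> snd x $ 3 = -1"
  by (auto simp: X1_def Y1_def)

lemma track:
  fixes c :: "real \<Rightarrow> (real^4) \<times> (real^4)"
  assumes c: "continuous_on {0..1} c"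
    and v: "\<forall>t\<in>{0..1}. c t \<in> Sp1 \<times> Sp1 \<and> (Tmap (c t) = c t \<or> Tmap (c t) = - c t)"
    and c0: "c 0 \<in> X1 \<union> Y1" and t: "t \<in> {0..1}"
  shows "c t \<in> X1 \<union> Y1 \<and> snd (c t) $ 3 = snd (c 0) $ 3"
proof -
  have cphi: "continuous_on {0..1} (\<lambda>t. phiT (c t))"
    unfolding phiT_def by (intro continuous_intros c)
  have vphi: "\<forall>t\<in>{0..1}. phiT (c t) = 2 \<or> phiT (c t) = -2"
    using v phiT_vals by blast
  have z01: "(0::real) \<in> {0..1}" by simp
  have c0S: "c 0 \<in> Sp1 \<times> Sp1" using bspec[OF v z01] by blast
  have p0: "phiT (c 0) = -2"
    using c0 Fminus_iff[OF c0S] phiT_vals(2)[OF c0S] by blast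
  have F: "c s \<in> X1 \<union> Y1" if s: "s \<in> {0..1}" for s
  proof -
    have "phiT (c s) = -2" using const_two[OF cphi vphi _ s] p0 by simp
    then have "Tmap (c s) \<noteq> c s" using phiT_vals(1) v s by force
    then have "Tmap (c s) = - c s" using v s by blast
    then show ?thesis using Fminus_iff v s by blast
  qed
  have cpsi: "continuous_on {0..1} (\<lambda>t. snd (c t) $ 3)" by (intro continuous_intros c)
  have vpsi: "\<forall>t\<in>{0..1}. snd (c t) $ 3 = 1 \<or> snd (c t) $ 3 = -1"
    using F psi_X1 psi_Y1 by blast
  show ?thesis using F[OF t] const_two[OF cpsi vpsi _ t] by simp
qed

lemma part_d:
  assumes V: "symmetric_loop W" and l: "is_lift Wt W" and w0: "Wt 0 \<in> X1"
    and wpi: "Wt pi \<in> X1 \<union> Y1"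
    and SH: "sym_homotopic W (\<lambda>k. diag1m1)"
  shows "Wt pi \<in> X1"
proof -
  obtain H where hH: "symmetric_homotopy H" and H0: "\<forall>k. H (k,0) = W k" and H1: "\<forall>k. H (k,1) = diag1m1"
    using SH by (auto simp: sym_homotopic_def)
  define U where "U = (UNIV :: real set) \<times> {0..1::real}"
  have contH: "continuous_on U H" using hH by (simp add: symmetric_homotopy_def U_def)
  have slice: "t \<in> {0..1} \<Longrightarrow> symmetric_loop (\<lambda>k. H (k,t))" for t
    using hH by (simp add: symmetric_homotopy_def)
  have HSO: "H \<in> U \<rightarrow> SO4"
  proof
    fix y assume "y \<in> U"
    then obtain k t where y: "y = (k,t)" "t \<in> {0..1}" by (auto simp: U_def)
    then show "H y \<in> SO4" using slice[OF y(2)] by (auto simp: symmetric_loop_def)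
  qed
  have cU: "convex U" unfolding U_def by (intro convex_Times convex_UNIV convex_real_interval)
  have w0S: "Wt 0 \<in> Sp1 \<times> Sp1" by (rule is_liftD(2)[OF l])
  have z: "(0,0) \<in> U" by (simp add: U_def)
  have feq: "H (0,0) = pmap (Wt 0)" using H0 is_liftD(3)[OF l] by simp
  obtain G where contG: "continuous_on U G" and GS: "G \<in> U \<rightarrow> Sp1 \<times> Sp1" and G00: "G (0,0) = Wt 0"
      and GH: "\<And>y. y \<in> U \<Longrightarrow> pmap (G y) = H y"
    using covering_space_lift_strong[OF pmap_covering w0S z convex_imp_simply_connected[OF cU]
        convex_imp_locally_path_connected[OF cU] contH HSO feq] by blast
  have sliceLift: "is_lift (\<lambda>k. G (k,t)) (\<lambda>k. H (k,t))" if t: "t \<in> {0..1}" for t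
    unfolding is_lift_def
  proof (intro conjI)
    show "continuous_on UNIV (\<lambda>k. G (k, t))"
      by (rule continuous_on_compose2[OF contG]) (use t in \<open>auto intro: continuous_intros simp: U_def\<close>)
    show "range (\<lambda>k. G (k, t)) \<subseteq> Sp1 \<times> Sp1"
    proof (rule subsetI)
      fix y assume "y \<in> range (\<lambda>k. G (k, t))"
      then obtain k where "y = G (k,t)" by blast
      moreover have "(k,t) \<in> U" using t by (simp add: U_def)
      ultimately show "y \<in> Sp1 \<times> Sp1" using GS by blast
    qed
    show "\<forall>k. pmap (G (k, t)) = H (k, t)" using GH t by (auto simp: U_def)
  qed
  have L0: "is_lift (\<lambda>k. G (k,0)) W" using sliceLift[of 0] H0 by simp
  have G0: "G (k,0) = Wt k" for k using lift_unique[OF L0 l, of 0] G00 by simp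
  have L1: "is_lift (\<lambda>k. G (k,1)) (\<lambda>k. diag1m1)" using sliceLift[of 1] H1 by simp
  have L1c: "is_lift (\<lambda>k. G (0,1)) (\<lambda>k. diag1m1)"
    using is_liftD(2,3)[OF L1, of 0] by (simp add: is_lift_def)
  have G1: "G (pi,1) = G (0,1)" using lift_unique[OF L1 L1c, of 0] by simp
  have fixk: "Tmap (G (k,t)) = G (k,t) \<or> Tmap (G (k,t)) = - G (k,t)"
    if t: "t \<in> {0..1}" and k: "H (-k,t) = H (k,t)" for k t
    using fix_pm[OF slice[OF t] is_liftD(2,3)[OF sliceLift[OF t]] k] .
  have Hpi: "H (-pi,t) = H (pi,t)" if t: "t \<in> {0..1}" for t
    using slice[OF t] by (auto simp: symmetric_loop_def dest: spec[of _ "-pi"])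
  have cG: "continuous_on {0..1} (\<lambda>t. G (k,t))" for k
    by (rule continuous_on_compose2[OF contG]) (auto intro: continuous_intros simp: U_def)
  have GSk: "t \<in> {0..1} \<Longrightarrow> G (k,t) \<in> Sp1 \<times> Sp1" for k t
  proof -
    assume "t \<in> {0..1}"
    then have "(k,t) \<in> U" by (simp add: U_def)
    then show ?thesis using GS by blast
  qed
  have tr0: "G (0,t) \<in> X1 \<union> Y1 \<and> snd (G (0,t)) $ 3 = snd (G (0,0)) $ 3" if "t \<in> {0..1}" for t
    by (rule track[OF cG, of 0]) (use fixk[of _ 0] GSk G00 w0 that in auto)
  have trpi: "G (pi,t) \<in> X1 \<union> Y1 \<and> snd (G (pi,t)) $ 3 = snd (G (pi,0)) $ 3" if "t \<in> {0..1}" for t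
    by (rule track[OF cG, of pi]) (use fixk[of _ pi] Hpi GSk G0 wpi that in auto)
  have "snd (Wt pi) $ 3 = 1"
  proof -
    have "snd (G (pi,0)) $ 3 = snd (G (pi,1)) $ 3" using trpi[of 1] by simp
    also have "\<dots> = snd (G (0,1)) $ 3" using G1 by simp
    also have "\<dots> = snd (G (0,0)) $ 3" using tr0[of 1] by simp
    also have "\<dots> = 1" using G00 w0 psi_X1 by simp
    finally show ?thesis using G0 by simp
  qed
  then show ?thesis using wpi psi_Y1 by fastforce
qed

lemma interp01:
  fixes t u :: real
  assumes "0 \<le> t" "t \<le> 1" "0 \<le> u" "u \<le> 1"
  shows "0 \<le> t + (1-t)*u \<and> t + (1-t)*u \<le> 1"
proof -
  have "(1-t)*u \<le> (1-t)" using assms by (intro mult_left_le) auto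
  moreover have "0 \<le> (1-t)*u" using assms by simp
  ultimately show ?thesis using assms by linarith
qed

lemma in_path_image: "u \<in> {0..1} \<Longrightarrow> path_image g \<subseteq> X \<Longrightarrow> g u \<in> X"
  unfolding path_image_def by blast

lemma build_G:
  fixes p al be :: "real \<Rightarrow> (real^4) \<times> (real^4)"
  assumes sc: "simply_connected S"
    and pp: "path p" "path_image p \<subseteq> S"
    and pa: "path al" "path_image al \<subseteq> X" and pb: "path be" "path_image be \<subseteq> X" and XS: "X \<subseteq> S"
    and sa: "pathstart al = pathstart p" and sb: "pathstart be = pathfinish p"
    and fa: "pathfinish al = e" and fb: "pathfinish be = e"
    and pX: "pathstart p \<in> X" "pathfinish p \<in> X"
  shows "\<exists>G::real\<times>real \<Rightarrow> (real^4)\<times>(real^4). continuous_on ({0..1}\<times>{0..1}) G \<and> G \<in> ({0..1}\<times>{0..1}) \<rightarrow> S \<and>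
             (\<forall>s\<in>{0..1}. G (0,s) = p s) \<and> (\<forall>s\<in>{0..1}. G (1,s) = e) \<and>
             (\<forall>t\<in>{0..1}. G (t,0) \<in> X \<and> G (t,1) \<in> X)"
proof -
  define q where "q = al +++ reversepath be"
  have jq: "pathfinish al = pathstart (reversepath be)" using fa fb by simp
  have pq: "path q" using pa pb jq by (simp add: q_def)
  have iq: "path_image q \<subseteq> X" using pa pb jq by (simp add: q_def path_image_join)
  have hpall: "\<forall>p q. path p \<and> path_image p \<subseteq> S \<and> path q \<and> path_image q \<subseteq> S \<and>
                pathstart q = pathstart p \<and> pathfinish q = pathfinish p \<longrightarrow> homotopic_paths S p q"
    using sc unfolding simply_connected_eq_homotopic_paths by blast
  have "pathstart q = pathstart p" "pathfinish q = pathfinish p" using sa sb by (simp_all add: q_def)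
  then have "homotopic_paths S p q"
    using hpall pp pq iq XS by blast
  then obtain K where contK: "continuous_on ({0..1} \<times> {0..1}) K"
      and KS: "K \<in> ({0..1} \<times> {0..1}) \<rightarrow> S"
      and K0: "\<forall>x\<in>{0..1}. K (0,x) = p x" and K1: "\<forall>x\<in>{0..1}. K (1,x) = q x"
      and Kends: "\<forall>t\<in>{0..1::real}. pathstart (K \<circ> Pair t) = pathstart p \<and> pathfinish (K \<circ> Pair t) = pathfinish p"
    unfolding homotopic_paths by blast
  define L where "L = (\<lambda>y::real\<times>real. if snd y \<le> 1/2 then al (fst y + (1 - fst y) * (2 * snd y))
                                         else be (fst y + (1 - fst y) * (2 - 2 * snd y)))"
  have ca: "continuous_on {0..1} al" and cb: "continuous_on {0..1} be" using pa pb by (auto simp: path_def)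
  have contL: "continuous_on ({0..1} \<times> {0..1}) L"
    unfolding L_def
  proof (rule continuous_on_cases_le)
    show "continuous_on {x \<in> {0..1} \<times> {0..1}. snd x \<le> 1 / 2} (\<lambda>x. al (fst x + (1 - fst x) * (2 * snd x)))"
    proof (rule continuous_on_compose2[OF ca])
      show "continuous_on {x \<in> {0..1} \<times> {0..1}. snd x \<le> 1 / 2} (\<lambda>x::real\<times>real. fst x + (1 - fst x) * (2 * snd x))"
        by (intro continuous_intros)
      show "(\<lambda>x::real\<times>real. fst x + (1 - fst x) * (2 * snd x)) ` {x \<in> {0..1} \<times> {0..1}. snd x \<le> 1 / 2} \<subseteq> {0..1}"
      proof (rule image_subsetI)
        fix x :: "real \<times> real" assume "x \<in> {x \<in> {0..1} \<times> {0..1}. snd x \<le> 1 / 2}"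
        then have "0 \<le> fst x" "fst x \<le> 1" "0 \<le> 2 * snd x" "2 * snd x \<le> 1" by auto
        then show "fst x + (1 - fst x) * (2 * snd x) \<in> {0..1}" using interp01 by simp
      qed
    qed
    show "continuous_on {x \<in> {0..1} \<times> {0..1}. 1 / 2 \<le> snd x} (\<lambda>x. be (fst x + (1 - fst x) * (2 - 2 * snd x)))"
    proof (rule continuous_on_compose2[OF cb])
      show "continuous_on {x \<in> {0..1} \<times> {0..1}. 1 / 2 \<le> snd x} (\<lambda>x::real\<times>real. fst x + (1 - fst x) * (2 - 2 * snd x))"
        by (intro continuous_intros)
      show "(\<lambda>x::real\<times>real. fst x + (1 - fst x) * (2 - 2 * snd x)) ` {x \<in> {0..1} \<times> {0..1}. 1 / 2 \<le> snd x} \<subseteq> {0..1}"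
      proof (rule image_subsetI)
        fix x :: "real \<times> real" assume "x \<in> {x \<in> {0..1} \<times> {0..1}. 1 / 2 \<le> snd x}"
        then have "0 \<le> fst x" "fst x \<le> 1" "0 \<le> 2 - 2 * snd x" "2 - 2 * snd x \<le> 1" by auto
        then show "fst x + (1 - fst x) * (2 - 2 * snd x) \<in> {0..1}" using interp01 by simp
      qed
    qed
    show "continuous_on ({0..1} \<times> {0..1}) snd" by (intro continuous_intros)
    show "\<And>x. x \<in> {0..1} \<times> {0..1} \<Longrightarrow> snd x = 1 / 2 \<Longrightarrow>
            al (fst x + (1 - fst x) * (2 * snd x)) = be (fst x + (1 - fst x) * (2 - 2 * snd x))"
    proof -
      fix x :: "real \<times> real" assume "snd x = 1/2"
      then have a: "2 * snd x = 1" "2 - 2 * snd x = 1" by simp_all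
      show "al (fst x + (1 - fst x) * (2 * snd x)) = be (fst x + (1 - fst x) * (2 - 2 * snd x))"
        using fa fb unfolding a by (simp add: pathfinish_def)
    qed
  qed
  have LX: "L y \<in> X" if yin: "y \<in> {0..1} \<times> {0..1}" for y
  proof -
    obtain t s where y: "y = (t,s)" "0 \<le> t" "t \<le> 1" "0 \<le> s" "s \<le> 1" using yin by (cases y) auto
    show ?thesis
    proof (cases "s \<le> 1/2")
      case True
      then have "t + (1 - t) * (2 * s) \<in> {0..1}" using interp01[of t "2 * s"] y by auto
      then show ?thesis using True y pa by (simp add: L_def in_path_image)
    next
      case False
      then have "t + (1 - t) * (2 - 2 * s) \<in> {0..1}" using interp01[of t "2 - 2 * s"] y by auto
      then show ?thesis using False y pb by (simp add: L_def in_path_image)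
    qed
  qed
  have L0: "L (0,s) = q s" for s
    by (simp add: L_def q_def joinpaths_def reversepath_def algebra_simps)
  define G where "G = (\<lambda>y::real\<times>real. if fst y \<le> 1/2 then K (2 * fst y, snd y) else L (2 * fst y - 1, snd y))"
  have contG: "continuous_on ({0..1} \<times> {0..1}) G"
    unfolding G_def
  proof (rule continuous_on_cases_le)
    show "continuous_on {x \<in> {0..1} \<times> {0..1}. fst x \<le> 1 / 2} (\<lambda>x. K (2 * fst x, snd x))"
      by (rule continuous_on_compose2[OF contK]) (auto intro!: continuous_intros simp: image_subset_iff)
    show "continuous_on {x \<in> {0..1} \<times> {0..1}. 1 / 2 \<le> fst x} (\<lambda>x. L (2 * fst x - 1, snd x))"
      by (rule continuous_on_compose2[OF contL]) (auto intro!: continuous_intros simp: image_subset_iff)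
    show "continuous_on ({0..1} \<times> {0..1}) fst" by (intro continuous_intros)
    show "\<And>x. x \<in> {0..1} \<times> {0..1} \<Longrightarrow> fst x = 1 / 2 \<Longrightarrow> K (2 * fst x, snd x) = L (2 * fst x - 1, snd x)"
    proof -
      fix x :: "real \<times> real" assume x: "x \<in> {0..1} \<times> {0..1}" "fst x = 1/2"
      then have a: "2 * fst x = 1" "2 * fst x - 1 = 0" by simp_all
      have "snd x \<in> {0..1}" using x by auto
      then show "K (2 * fst x, snd x) = L (2 * fst x - 1, snd x)" unfolding a using K1 L0 by simp
    qed
  qed
  have GS: "G \<in> ({0..1} \<times> {0..1}) \<rightarrow> S"
  proof
    fix y :: "real \<times> real" assume y: "y \<in> {0..1} \<times> {0..1}"
    show "G y \<in> S"
    proof (cases "fst y \<le> 1/2")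
      case True
      then have "(2 * fst y, snd y) \<in> {0..1} \<times> {0..1}" using y by auto
      then show ?thesis using True KS by (auto simp: G_def)
    next
      case False
      then have "(2 * fst y - 1, snd y) \<in> {0..1} \<times> {0..1}" using y by auto
      then show ?thesis using False LX XS by (auto simp: G_def)
    qed
  qed
  have G0: "\<forall>s\<in>{0..1}. G (0,s) = p s" using K0 by (simp add: G_def)
  have G1: "\<forall>s\<in>{0..1}. G (1,s) = e" using fa fb by (simp add: G_def L_def pathfinish_def)
  have Gends: "G (t,0) \<in> X \<and> G (t,1) \<in> X" if t: "t \<in> {0..1}" for t
  proof (cases "t \<le> 1/2")
    case True
    then have "2*t \<in> {0..1}" using t by auto
    then have "K (2*t,0) = pathstart p" "K (2*t,1) = pathfinish p"
      using Kends by (auto simp: pathstart_def pathfinish_def)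
    then show ?thesis using True pX by (simp add: G_def)
  next
    case False
    then have "2*t - 1 \<in> {0..1}" using t by auto
    then show ?thesis using False pa pb by (simp add: G_def L_def in_path_image)
  qed
  show ?thesis by (rule exI[of _ G]) (use contG GS G0 G1 Gends in blast)
qed

lemma norm3sq: "(norm (v::real^3))^2 = v$1^2 + v$2^2 + v$3^2"
  by (simp only: power2_norm_eq_inner) (simp add: inner_vec_def sum_3 power2_eq_square)

lemma X1_path_connected: "path_connected X1"
proof -
  define f :: "real^3 \<Rightarrow> (real^4) \<times> (real^4)" where
    "f v = (v$1 *\<^sub>R qi + v$2 *\<^sub>R qj + v$3 *\<^sub>R qk, qj)" for v
  have eq: "X1 = f ` sphere 0 1"
  proof
    show "X1 \<subseteq> f ` sphere 0 1"
    proof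
      fix x assume "x \<in> X1"
      then obtain b c d where x: "x = (vector [0,b,c,d], qj)" "b^2 + c^2 + d^2 = 1" by (auto simp: X1_def)
      define v :: "real^3" where "v = vector [b,c,d]"
      have "(norm v)^2 = 1" using x(2) by (simp add: norm3sq v_def)
      then have "norm v = 1" using norm_ge_zero[of v] by (auto simp: power2_eq_1_iff)
      moreover have "f v = x" by (simp add: f_def v_def x vec4_eq_iff)
      ultimately show "x \<in> f ` sphere 0 1" by force
    qed
    show "f ` sphere 0 1 \<subseteq> X1"
    proof
      fix x assume "x \<in> f ` sphere 0 1"
      then obtain v :: "real^3" where v: "norm v = 1" "x = f v" by auto
      have "v$1^2 + v$2^2 + v$3^2 = 1" using norm3sq[of v] v(1) by simp
      moreover have "x = (vector [0, v$1, v$2, v$3], qj)" by (simp add: v(2) f_def vec4_eq_iff)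
      ultimately show "x \<in> X1" unfolding X1_def by blast
    qed
  qed
  have c: "continuous_on (sphere 0 1) f" unfolding f_def by (intro continuous_intros)
  have pc: "path_connected (sphere (0::real^3) 1)" by (rule path_connected_sphere) simp
  show ?thesis unfolding eq by (rule path_connected_continuous_image[OF c pc])
qed

lemma S_simply: "simply_connected (Sp1 \<times> Sp1)"
proof -
  have "Sp1 = sphere (0::real^4) 1" by (auto simp: Sp1_def)
  moreover have "simply_connected (sphere (0::real^4) 1)" by (rule simply_connected_sphere) simp
  ultimately show ?thesis by (simp add: simply_connected_Times)
qed

lemma e_X1: "(qj,qj) \<in> X1"
  unfolding X1_def by (intro CollectI exI[of _ 0] exI[of _ 1]) (simp add: vec4_eq_iff)

lemma X1_fix: "x \<in> X1 \<Longrightarrow> - Tmap x = x"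
proof -
  assume x: "x \<in> X1"
  then have "x \<in> Sp1 \<times> Sp1" using X1_Sp1 by blast
  then have "Tmap x = - x" using Fminus_iff x by blast
  then show ?thesis by simp
qed

lemma sin0_theta: "sin k = 0 \<Longrightarrow> arccos (cos k) / pi = 0 \<or> arccos (cos k) / pi = 1"
proof -
  assume "sin k = 0"
  then have "(cos k)^2 = 1" using sin_cos_squared_add[of k] by simp
  then have "cos k = 1 \<or> cos k = -1" by (simp add: power2_eq_1_iff)
  then show ?thesis by auto
qed

lemma theta01: "arccos (cos k) / pi \<in> {0..1}"
  using arccos_bounded[of "cos k"] by (auto simp: divide_simps)

lemma arccos_cos_rel:
  "\<exists>n::int. (0 \<le> sin k \<longrightarrow> k = arccos (cos k) + 2*pi * of_int n) \<and>
            (sin k < 0 \<longrightarrow> k = - arccos (cos k) + 2*pi * of_int n)"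
proof -
  define a where "a = arccos (cos k)"
  have ca: "cos a = cos k" by (simp add: a_def)
  have "sin a = sqrt (1 - (cos k)^2)" by (simp add: a_def sin_arccos)
  also have "1 - (cos k)^2 = (sin k)^2" by (simp add: sin_squared_eq)
  finally have sa: "sin a = \<bar>sin k\<bar>" by simp
  show ?thesis
  proof (cases "0 \<le> sin k")
    case True
    then have "sin k = sin a \<and> cos k = cos a" using sa ca by simp
    then obtain n :: int where "k = a + 2*pi * of_int n" using sin_cos_eq_iff by blast
    then show ?thesis using True by (auto simp: a_def)
  next
    case False
    then have "sin k = sin (-a) \<and> cos k = cos (-a)" using sa ca by simp
    then obtain n :: int where "k = -a + 2*pi * of_int n" using sin_cos_eq_iff by blast
    then show ?thesis using False by (auto simp: a_def)
  qed
qed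

lemma part_e:
  assumes V: "symmetric_loop W" and l: "is_lift Wt W" and w0: "Wt 0 \<in> X1" and wpi: "Wt pi \<in> X1"
    and per: "\<And>k. Wt (k + 2*pi) = Wt k" and asym: "\<And>k. - Tmap (Wt (-k)) = Wt k"
  shows "sym_homotopic W (\<lambda>k. diag1m1)"
proof -
  define S where "S = Sp1 \<times> Sp1"
  define e where "e = (qj, qj)"
  have eX: "e \<in> X1" using e_X1 by (simp add: e_def)
  obtain al where al: "path al" "path_image al \<subseteq> X1" "pathstart al = Wt 0" "pathfinish al = e"
    using X1_path_connected w0 eX unfolding path_connected_def by blast
  obtain be where be: "path be" "path_image be \<subseteq> X1" "pathstart be = Wt pi" "pathfinish be = e"
    using X1_path_connected wpi eX unfolding path_connected_def by blast
  define p where "p = (\<lambda>s. Wt (pi * s))"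
  have pp: "path p" unfolding path_def p_def
    by (rule continuous_on_compose2[OF is_liftD(1)[OF l]]) (auto intro: continuous_intros)
  have pim: "path_image p \<subseteq> S" unfolding path_image_def p_def S_def using is_liftD(2)[OF l] by blast
  have ps: "pathstart p = Wt 0" "pathfinish p = Wt pi" by (simp_all add: p_def pathstart_def pathfinish_def)
  obtain G :: "real \<times> real \<Rightarrow> (real^4) \<times> (real^4)" where
      contG: "continuous_on ({0..1}\<times>{0..1}) G" and GS: "G \<in> ({0..1}\<times>{0..1}) \<rightarrow> S"
      and G0: "\<forall>s\<in>{0..1}. G (0,s) = p s" and G1: "\<forall>s\<in>{0..1}. G (1,s) = e"
      and GX: "\<forall>t\<in>{0..1}. G (t,0) \<in> X1 \<and> G (t,1) \<in> X1"
    using build_G[OF S_simply[folded S_def] pp pim al(1,2) be(1,2) X1_Sp1[folded S_def]] al(3,4) be(3,4) ps w0 wpi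
    by metis
  define th where "th = (\<lambda>k::real. arccos (cos k) / pi)"
  have th01: "th k \<in> {0..1}" for k using theta01 by (simp add: th_def)
  define U where "U = (UNIV::real set) \<times> {0..1::real}"
  define G2 where "G2 = (\<lambda>y::real\<times>real. G (snd y, th (fst y)))"
  define Gh where "Gh = (\<lambda>y::real\<times>real. if - sin (fst y) \<le> 0 then G2 y else - Tmap (G2 y))"
  define H where "H = (\<lambda>y. pmap (Gh y))"
  have G2S: "y \<in> U \<Longrightarrow> G2 y \<in> S" for y
  proof -
    assume "y \<in> U"
    then have "(snd y, th (fst y)) \<in> {0..1}\<times>{0..1}" using th01 by (auto simp: U_def)
    then show ?thesis using GS by (auto simp: G2_def)
  qed
  have GhS: "y \<in> U \<Longrightarrow> Gh y \<in> S" for y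
    using G2S Tmap_Sp1 Sp1_neg by (auto simp: Gh_def S_def)
  have cth: "continuous_on A f \<Longrightarrow> continuous_on A (\<lambda>x. th (f x))" for A and f :: "real \<times> real \<Rightarrow> real"
    unfolding th_def by (intro continuous_intros) auto
  have cG2: "continuous_on U G2"
    unfolding G2_def
  proof (rule continuous_on_compose2[OF contG])
    show "continuous_on U (\<lambda>x. (snd x, th (fst x)))" by (intro continuous_intros cth)
    show "(\<lambda>x. (snd x, th (fst x))) ` U \<subseteq> {0..1} \<times> {0..1}"
    proof (rule image_subsetI)
      fix x assume "x \<in> U"
      then show "(snd x, th (fst x)) \<in> {0..1} \<times> {0..1}" using th01[of "fst x"] by (auto simp: U_def)
    qed
  qed
  have sin0: "sin k = 0 \<Longrightarrow> t \<in> {0..1} \<Longrightarrow> G2 (k,t) \<in> X1" for k t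
    using sin0_theta[of k] GX by (auto simp: G2_def th_def)
  have cGh: "continuous_on U Gh"
    unfolding Gh_def
  proof (rule continuous_on_cases_le)
    show "continuous_on {x \<in> U. - sin (fst x) \<le> 0} G2" by (rule continuous_on_subset[OF cG2]) auto
    show "continuous_on {x \<in> U. 0 \<le> - sin (fst x)} (\<lambda>x. - Tmap (G2 x))"
      by (intro continuous_intros continuous_on_subset[OF cG2]) auto
    show "continuous_on U (\<lambda>x. - sin (fst x))" by (intro continuous_intros)
    show "\<And>x. x \<in> U \<Longrightarrow> - sin (fst x) = 0 \<Longrightarrow> G2 x = - Tmap (G2 x)"
    proof -
      fix x assume "x \<in> U" "- sin (fst x) = 0"
      then have "G2 x \<in> X1" using sin0[of "fst x" "snd x"] by (cases x) (auto simp: U_def)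
      then show "G2 x = - Tmap (G2 x)" using X1_fix by simp
    qed
  qed
  have cH: "continuous_on U H"
    unfolding H_def
    by (rule continuous_on_compose2[OF continuous_on_pmap cGh]) (use GhS in \<open>force simp: S_def\<close>)
  have Gh_per: "Gh (k + 2*pi, t) = Gh (k, t)" for k t
    by (simp add: Gh_def G2_def th_def)
  have Gh_sym: "Gh (-k, t) = - Tmap (Gh (k, t))" if t: "t \<in> {0..1}" for k t
  proof -
    have g2: "G2 (-k, t) = G2 (k, t)" by (simp add: G2_def th_def)
    consider "sin k > 0" | "sin k < 0" | "sin k = 0" by linarith
    then show ?thesis
    proof cases
      case 1 then show ?thesis by (simp add: Gh_def g2)
    next
      case 2 then show ?thesis by (simp add: Gh_def g2 Tmap_neg Tmap_Tmap)
    next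
      case 3
      then have "G2 (k,t) \<in> X1" using sin0 t by blast
      then show ?thesis using 3 X1_fix by (simp add: Gh_def g2)
    qed
  qed
  have slice: "symmetric_loop (\<lambda>k. H (k,t))" if t: "t \<in> {0..1}" for t
    unfolding symmetric_loop_def
  proof (intro conjI allI)
    show "continuous_on UNIV (\<lambda>k. H (k, t))"
      by (rule continuous_on_compose2[OF cH]) (use t in \<open>auto intro!: continuous_intros simp: U_def\<close>)
    show "range (\<lambda>k. H (k, t)) \<subseteq> SO4"
    proof (rule image_subsetI)
      fix k have "(k,t) \<in> U" using t by (simp add: U_def)
      then show "H (k,t) \<in> SO4" using GhS pmap_SO4 by (simp add: H_def S_def)
    qed
    fix k
    show "H (k + 2 * pi, t) = H (k, t)" by (simp add: H_def Gh_per)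
    have kU: "(k,t) \<in> U" using t by (simp add: U_def)
    have "wmat ** H (k, t) ** matrix_inv wmat = matrix_inv (pmap (Tmap (Gh (k,t))))"
      unfolding H_def by (rule sym_T) (use GhS[OF kU] in \<open>simp add: S_def\<close>)
    also have "\<dots> = matrix_inv (H (-k, t))"
      by (simp add: H_def Gh_sym[OF t] pmap_neg')
    finally show "wmat ** H (k, t) ** matrix_inv wmat = matrix_inv (H (- k, t))" .
  qed
  have Hhom: "symmetric_homotopy H"
    unfolding symmetric_homotopy_def using cH slice by (simp add: U_def)
  have H0: "H (k,0) = W k" for k
  proof -
    define a where "a = arccos (cos k)"
    have pa: "pi * th k = a" by (simp add: th_def a_def)
    have G20: "G2 (k,0) = Wt a" using G0 th01[of k] pa by (simp add: G2_def p_def)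
    obtain n :: int where n: "0 \<le> sin k \<longrightarrow> k = a + 2*pi * of_int n" "sin k < 0 \<longrightarrow> k = - a + 2*pi * of_int n"
      using arccos_cos_rel[of k] by (auto simp: a_def)
    have "Gh (k,0) = Wt k"
    proof (cases "0 \<le> sin k")
      case True
      then have "Wt k = Wt a" using n(1) periodic_int[of Wt a n] per by simp
      then show ?thesis using True by (simp add: Gh_def G20)
    next
      case False
      then have "Wt k = Wt (-a)" using n(2) periodic_int[of Wt "-a" n] per by simp
      also have "\<dots> = - Tmap (Wt a)" using asym[of "-a"] by simp
      finally show ?thesis using False by (simp add: Gh_def G20)
    qed
    then show ?thesis using is_liftD(3)[OF l] by (simp add: H_def)
  qed
  have H1: "H (k,1) = diag1m1" for k
  proof -
    have "G2 (k,1) = e" using G1 th01[of k] by (simp add: G2_def)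
    then have "Gh (k,1) = e" using X1_fix[OF eX] by (simp add: Gh_def)
    then show ?thesis by (simp add: H_def e_def diag_pmap)
  qed
  show ?thesis unfolding sym_homotopic_def using Hhom H0 H1 by blast
qed

theorem theorem3:
  fixes W :: "real \<Rightarrow> real^4^4"
  assumes "symmetric_loop W"
    and "null_homotopic_loop W"
    and "\<exists>Wt. is_lift Wt W \<and> Tmap (Wt 0) = (- fst (Wt 0), - snd (Wt 0))"
  shows "(\<exists>Wt. is_lift Wt W \<and> Wt 0 \<in> X1) \<and>
         (\<forall>Wt. is_lift Wt W \<and> Wt 0 \<in> X1 \<longrightarrow>
            Wt pi \<in> X1 \<union> Y1 \<and> X1 \<inter> Y1 = {} \<and>
            (sym_homotopic W (\<lambda>k. diag1m1) \<longleftrightarrow> Wt pi \<in> X1) \<and>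
            (Wt pi \<in> Y1 \<longrightarrow> \<not> sym_homotopic W (\<lambda>k. diag1m1)))"
proof (intro conjI allI impI)
  note V = assms(1) and N = assms(2)
  obtain Wt0 where l0: "is_lift Wt0 W" and T0: "Tmap (Wt0 0) = (- fst (Wt0 0), - snd (Wt0 0))"
    using assms(3) by blast
  have T0': "Tmap (Wt0 0) = - Wt0 0" using T0 by (cases "Wt0 0") simp
  have W0: "Wt0 0 \<in> X1 \<union> Y1" using Fminus_iff[OF is_liftD(2)[OF l0]] T0' by blast
  show "\<exists>Wt. is_lift Wt W \<and> Wt 0 \<in> X1"
  proof (cases "Wt0 0 \<in> X1")
    case True then show ?thesis using l0 by blast
  next
    case False
    then have "Wt0 0 \<in> Y1" using W0 by blast
    then have "- Wt0 0 \<in> X1" by (rule neg_Y1)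
    then show ?thesis using lift_neg[OF l0] by (intro exI[of _ "\<lambda>k. - Wt0 k"]) simp
  qed
  fix Wt assume a: "is_lift Wt W \<and> Wt 0 \<in> X1"
  then have l: "is_lift Wt W" and w0: "Wt 0 \<in> X1" by auto
  have w0': "Wt 0 \<in> X1 \<union> Y1" using w0 by blast
  show wpi: "Wt pi \<in> X1 \<union> Y1" by (rule part_c[OF V N l w0'])
  show "X1 \<inter> Y1 = {}" by (rule X1_Y1_disj)
  have per: "\<And>k. Wt (k + 2*pi) = Wt k" by (rule part_b[OF V N l])
  have asym: "\<And>k. - Tmap (Wt (-k)) = Wt k" by (rule part_a[OF V l w0'])
  show iff: "sym_homotopic W (\<lambda>k. diag1m1) \<longleftrightarrow> Wt pi \<in> X1"
  proof
    assume "sym_homotopic W (\<lambda>k. diag1m1)"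
    then show "Wt pi \<in> X1" by (rule part_d[OF V l w0 wpi])
  next
    assume "Wt pi \<in> X1"
    then show "sym_homotopic W (\<lambda>k. diag1m1)" by (rule part_e[OF V l w0 _ per asym])
  qed
  show "Wt pi \<in> Y1 \<Longrightarrow> \<not> sym_homotopic W (\<lambda>k. diag1m1)"
    using iff X1_Y1_disj by blast
qed

end
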